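(* Let $G$ be a finite simple graph with $s$ vertices $t_1,\dots,t_s$ and let $I_c(G)\subset S=K[t_1,\ldots,t_s]$ be its ideal of covers. If ${\rm v}(I_c(G))=s-2$, then (a) $I_c(G)$ is Cohen–Macaulay; (b) ${\rm v}_{\mathfrak p}(I_c(G))=s-2$ for every $\mathfrak p\in{\rm Ass}(I_c(G))$; (c) $(I_c(G)\colon\mathfrak p)/I_c(G)$ is a principal ideal of $S/I_c(G)$ for every $\mathfrak p\in{\rm Ass}(I_c(G))$.
   Context: $K$ is a field, $S$ has the standard grading. The ideal of covers $I_c(G)$ is generated by $\prod_{t_i\in C}t_i$ over all minimal vertex covers $C$ of $G$ (a vertex cover is a subset of $V(G)$ meeting every edge). For a graded ideal $I$, ${\rm v}(I)=\min\{d\ge0:\exists f\in S_d,\ \exists\mathfrak p\in{\rm Ass}(I),\ (I\colon f)=\mathfrak p\}$, and for $\mathfrak p\in{\rm Ass}(I)$, ${\rm v}_{\mathfrak p}(I)=\min\{d\ge0:\exists f\in S_d,\ (I\colon f)=\mathfrak p\}$. An ideal $I$ is Cohen–Macaulay if ${\rm pd}_S(S/I)={\rm ht}(I)$. *)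

theory Defs
  imports "HOL-Library.Poly_Mapping" "HOL-Library.Extended_Nat"
begin

type_synonym ('v, 'k) mpoly = "('v \<Rightarrow>\<^sub>0 nat) \<Rightarrow>\<^sub>0 'k"

definition Var :: "'v \<Rightarrow> ('v, 'k::field) mpoly" where
  "Var i = Poly_Mapping.single (Poly_Mapping.single i 1) 1"

definition mdeg :: "('v \<Rightarrow>\<^sub>0 nat) \<Rightarrow> nat" where
  "mdeg m = (\<Sum>i\<in>Poly_Mapping.keys m. Poly_Mapping.lookup m i)"

definition homog :: "nat \<Rightarrow> ('v, 'k::field) mpoly set" where
  "homog d = {f. \<forall>m\<in>Poly_Mapping.keys f. mdeg m = d}"

definition is_ideal :: "'a::comm_ring_1 set \<Rightarrow> bool" where
  "is_ideal I \<longleftrightarrow> 0 \<in> I \<and> (\<forall>a\<in>I. \<forall>b\<in>I. a + b \<in> I) \<and> (\<forall>a\<in>I. \<forall>r. r * a \<in> I)"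

definition ideal_gen :: "'a::comm_ring_1 set \<Rightarrow> 'a set" where
  "ideal_gen G = \<Inter>{I. is_ideal I \<and> G \<subseteq> I}"

definition is_prime_ideal :: "'a::comm_ring_1 set \<Rightarrow> bool" where
  "is_prime_ideal P \<longleftrightarrow> is_ideal P \<and> P \<noteq> UNIV \<and> (\<forall>a b. a * b \<in> P \<longrightarrow> a \<in> P \<or> b \<in> P)"

definition colon :: "'a::comm_ring_1 set \<Rightarrow> 'a set \<Rightarrow> 'a set" where
  "colon I J = {f. \<forall>g\<in>J. f * g \<in> I}"

definition colon_elem :: "'a::comm_ring_1 set \<Rightarrow> 'a \<Rightarrow> 'a set" where
  "colon_elem I f = {g. g * f \<in> I}"

definition Ass :: "'a::comm_ring_1 set \<Rightarrow> 'a set set" where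
  "Ass I = {P. is_prime_ideal P \<and> (\<exists>f. colon_elem I f = P)}"

section \<open>v-number (as an extended natural; \<infinity> if Ass I is empty)\<close>

definition v_number :: "('v, 'k::field) mpoly set \<Rightarrow> enat" where
  "v_number I = (INF d\<in>{d. \<exists>f\<in>homog d. \<exists>P\<in>Ass I. colon_elem I f = P}. enat d)"

definition v_number_at :: "('v, 'k::field) mpoly set \<Rightarrow> ('v, 'k) mpoly set \<Rightarrow> enat" where
  "v_number_at I P = (INF d\<in>{d. \<exists>f\<in>homog d. colon_elem I f = P}. enat d)"

definition prime_height :: "'a::comm_ring_1 set \<Rightarrow> enat" where
  "prime_height P = (SUP n\<in>{n. \<exists>c::nat \<Rightarrow> 'a set. c n = P \<and> (\<forall>i\<le>n. is_prime_ideal (c i))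
                                   \<and> (\<forall>i<n. c i \<subset> c (Suc i))}. enat n)"

definition height :: "'a::comm_ring_1 set \<Rightarrow> enat" where
  "height I = (INF P\<in>{P. is_prime_ideal P \<and> I \<subseteq> P}. prime_height P)"

text \<open>Elements of the free module F = R^b are vectors nat => R vanishing from index b on.
  A matrix M :: nat => nat => R represents the map R^b -> R^b' given by x |-> M x.\<close>

definition free_mod :: "nat \<Rightarrow> (nat \<Rightarrow> 'a::comm_ring_1) set" where
  "free_mod b = {x. \<forall>k\<ge>b. x k = 0}"

definition mat_app :: "nat \<Rightarrow> nat \<Rightarrow> (nat \<Rightarrow> nat \<Rightarrow> 'a::comm_ring_1) \<Rightarrow> (nat \<Rightarrow> 'a) \<Rightarrow> (nat \<Rightarrow> 'a)" where
  "mat_app b' b M x = (\<lambda>j. if j < b' then (\<Sum>k<b. M j k * x k) else 0)"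

text \<open>A free resolution of length n of S/I:
   0 -> F_n -> ... -> F_1 -> F_0 = R -> R/I -> 0, with ranks r i (r 0 = 1) and
   differentials d i : F_i -> F_(i-1) for 1 <= i <= n.  The kernel of the augmentation
   F_0 -> R/I is I (embedded as vectors supported at index 0); exactness means that the
   kernel at each position i <= n equals the image of d (i+1) for i < n, and is 0 for i = n.\<close>

definition kernel_at :: "'a::comm_ring_1 set \<Rightarrow> (nat \<Rightarrow> nat) \<Rightarrow> (nat \<Rightarrow> nat \<Rightarrow> nat \<Rightarrow> 'a) \<Rightarrow> nat \<Rightarrow> (nat \<Rightarrow> 'a) set" where
  "kernel_at I r d i =
     (if i = 0 then {x \<in> free_mod 1. x 0 \<in> I}
      else {x \<in> free_mod (r i). mat_app (r (i - 1)) (r i) (d i) x = (\<lambda>_. 0)})"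

definition image_at :: "(nat \<Rightarrow> nat) \<Rightarrow> (nat \<Rightarrow> nat \<Rightarrow> nat \<Rightarrow> 'a::comm_ring_1) \<Rightarrow> nat \<Rightarrow> (nat \<Rightarrow> 'a) set" where
  "image_at r d i = mat_app (r (i - 1)) (r i) (d i) ` free_mod (r i)"

definition is_free_resolution :: "'a::comm_ring_1 set \<Rightarrow> nat \<Rightarrow> (nat \<Rightarrow> nat) \<Rightarrow> (nat \<Rightarrow> nat \<Rightarrow> nat \<Rightarrow> 'a) \<Rightarrow> bool" where
  "is_free_resolution I n r d \<longleftrightarrow> r 0 = 1 \<and>
     (\<forall>i<n. kernel_at I r d i = image_at r d (Suc i)) \<and> kernel_at I r d n = {\<lambda>_. 0}"

definition proj_dim_quot :: "'a::comm_ring_1 set \<Rightarrow> enat" where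
  "proj_dim_quot I = (INF n\<in>{n. \<exists>r d. is_free_resolution I n r d}. enat n)"

definition cohen_macaulay :: "'a::comm_ring_1 set \<Rightarrow> bool" where
  "cohen_macaulay I \<longleftrightarrow> proj_dim_quot I = height I"

text \<open>A finite simple graph on the vertex set UNIV :: 'v set (with 'v finite):
  a set of edges, each a 2-element set of vertices.\<close>

definition simple_graph :: "'v set set \<Rightarrow> bool" where
  "simple_graph E \<longleftrightarrow> (\<forall>e\<in>E. card e = 2)"

definition vertex_cover :: "'v set set \<Rightarrow> 'v set \<Rightarrow> bool" where
  "vertex_cover E C \<longleftrightarrow> (\<forall>e\<in>E. e \<inter> C \<noteq> {})"

definition min_vertex_cover :: "'v set set \<Rightarrow> 'v set \<Rightarrow> bool" where
  "min_vertex_cover E C \<longleftrightarrow> vertex_cover E C \<and> (\<forall>C'. C' \<subset> C \<longrightarrow> \<not> vertex_cover E C')"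

definition cover_ideal :: "'v set set \<Rightarrow> ('v, 'k::field) mpoly set" where
  "cover_ideal E = ideal_gen {(\<Prod>i\<in>C. Var i) | C. min_vertex_cover E C}"

end

theory Submission
  imports Defs "HOL-Library.Countable"
begin


lemma pm_expand:
  fixes p :: "'a \<Rightarrow>\<^sub>0 'b::comm_monoid_add"
  shows "p = (\<Sum>n\<in>Poly_Mapping.keys p. Poly_Mapping.single n (Poly_Mapping.lookup p n))"
proof (rule poly_mapping_eqI)
  fix k
  have "Poly_Mapping.lookup (\<Sum>n\<in>Poly_Mapping.keys p. Poly_Mapping.single n (Poly_Mapping.lookup p n)) k
     = (\<Sum>n\<in>Poly_Mapping.keys p. (Poly_Mapping.lookup p n when n = k))"
    by (simp add: lookup_sum lookup_single)
  also have "\<dots> = Poly_Mapping.lookup p k"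
    by (cases "k \<in> Poly_Mapping.keys p") (auto simp: when_def in_keys_iff)
  finally show "Poly_Mapping.lookup p k = Poly_Mapping.lookup (\<Sum>n\<in>Poly_Mapping.keys p. Poly_Mapping.single n (Poly_Mapping.lookup p n)) k" by simp
qed

lemma lookup_mult_fin:
  fixes p q :: "'a::comm_monoid_add \<Rightarrow>\<^sub>0 'b::comm_semiring_0"
  shows "Poly_Mapping.lookup (p * q) k = (\<Sum>l\<in>Poly_Mapping.keys p. \<Sum>m\<in>Poly_Mapping.keys q.
            (Poly_Mapping.lookup p l * Poly_Mapping.lookup q m when l + m = k))"
proof -
  have "p * q = (\<Sum>l\<in>Poly_Mapping.keys p. Poly_Mapping.single l (Poly_Mapping.lookup p l)) *
                (\<Sum>m\<in>Poly_Mapping.keys q. Poly_Mapping.single m (Poly_Mapping.lookup q m))"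
    using pm_expand[of p] pm_expand[of q] by simp
  also have "\<dots> = (\<Sum>l\<in>Poly_Mapping.keys p. \<Sum>m\<in>Poly_Mapping.keys q.
       Poly_Mapping.single (l + m) (Poly_Mapping.lookup p l * Poly_Mapping.lookup q m))"
    by (simp add: sum_product mult_single)
  finally show ?thesis by (simp add: lookup_sum lookup_single)
qed

lemma mult_nz_gen:
  fixes p q :: "'a::comm_monoid_add \<Rightarrow>\<^sub>0 'b::{comm_semiring_0, semiring_no_zero_divisors}"
    and \<phi> :: "'a \<Rightarrow> 'c::linordered_cancel_ab_semigroup_add"
  assumes inj: "inj \<phi>" and add: "\<And>a b. \<phi> (a + b) = \<phi> a + \<phi> b"
    and "p \<noteq> 0" "q \<noteq> 0"
  shows "p * q \<noteq> 0"
proof -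
  let ?F = "Poly_Mapping.keys p" and ?G = "Poly_Mapping.keys q"
  have F: "finite ?F" "?F \<noteq> {}" and G: "finite ?G" "?G \<noteq> {}" using assms by auto
  have "Max (\<phi> ` ?F) \<in> \<phi> ` ?F" using F by simp
  then obtain a0 where a0': "a0 \<in> ?F" "\<phi> a0 = Max (\<phi> ` ?F)" by auto
  have a0: "a0 \<in> ?F" "\<And>a. a \<in> ?F \<Longrightarrow> \<phi> a \<le> \<phi> a0"
    using a0' F by auto
  have "Max (\<phi> ` ?G) \<in> \<phi> ` ?G" using G by simp
  then obtain b0 where b0': "b0 \<in> ?G" "\<phi> b0 = Max (\<phi> ` ?G)" by auto
  have b0: "b0 \<in> ?G" "\<And>b. b \<in> ?G \<Longrightarrow> \<phi> b \<le> \<phi> b0"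
    using b0' G by auto
  have uniq: "a = a0 \<and> b = b0" if "a \<in> ?F" "b \<in> ?G" "a + b = a0 + b0" for a b
  proof -
    have e: "\<phi> a + \<phi> b = \<phi> a0 + \<phi> b0" using that add by metis
    have "\<phi> a = \<phi> a0"
    proof (rule ccontr)
      assume "\<phi> a \<noteq> \<phi> a0"
      hence "\<phi> a < \<phi> a0" using a0(2)[OF that(1)] by simp
      hence "\<phi> a + \<phi> b < \<phi> a0 + \<phi> b0" using b0(2)[OF that(2)] by (rule add_less_le_mono)
      thus False using e by simp
    qed
    moreover hence "\<phi> b = \<phi> b0" using e by simp
    ultimately show ?thesis using injD[OF inj] by blast
  qed
  have "Poly_Mapping.lookup (p * q) (a0 + b0) = (\<Sum>l\<in>?F. \<Sum>m\<in>?G.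
            (Poly_Mapping.lookup p l * Poly_Mapping.lookup q m when l + m = a0 + b0))"
    by (rule lookup_mult_fin)
  also have "\<dots> = (\<Sum>l\<in>?F. \<Sum>m\<in>?G.
            (Poly_Mapping.lookup p l * Poly_Mapping.lookup q m when l = a0 \<and> m = b0))"
  proof (intro sum.cong refl)
    fix l m assume lm: "l \<in> ?F" "m \<in> ?G"
    show "(Poly_Mapping.lookup p l * Poly_Mapping.lookup q m when l + m = a0 + b0) =
          (Poly_Mapping.lookup p l * Poly_Mapping.lookup q m when l = a0 \<and> m = b0)"
      using uniq[OF lm] by (cases "l + m = a0 + b0") (auto simp: when_def)
  qed
  also have "\<dots> = Poly_Mapping.lookup p a0 * Poly_Mapping.lookup q b0"
  proof -
    have "(\<Sum>l\<in>?F. \<Sum>m\<in>?G. (Poly_Mapping.lookup p l * Poly_Mapping.lookup q m when l = a0 \<and> m = b0))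
       = (\<Sum>l\<in>?F. if l = a0 then (\<Sum>m\<in>?G. if m = b0 then Poly_Mapping.lookup p l * Poly_Mapping.lookup q m else 0) else 0)"
      by (intro sum.cong refl) (auto simp: when_def)
    also have "\<dots> = Poly_Mapping.lookup p a0 * Poly_Mapping.lookup q b0"
      using a0(1) b0(1) F(1) G(1) by (simp add: sum.delta)
    finally show ?thesis .
  qed
  also have "\<dots> \<noteq> 0" using a0(1) b0(1) by (simp add: in_keys_iff)
  finally show ?thesis by auto
qed

definition enc_pm :: "('v::countable \<Rightarrow>\<^sub>0 nat) \<Rightarrow> (nat \<Rightarrow>\<^sub>0 nat)" where
  "enc_pm n = Abs_poly_mapping (\<lambda>i. if i \<in> range (to_nat :: 'v \<Rightarrow> nat) then Poly_Mapping.lookup n (from_nat i) else 0)"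

lemma lookup_enc_pm:
  fixes n :: "'v::countable \<Rightarrow>\<^sub>0 nat"
  shows "Poly_Mapping.lookup (enc_pm n) i = (if i \<in> range (to_nat :: 'v \<Rightarrow> nat) then Poly_Mapping.lookup n (from_nat i) else 0)"
proof -
  have "{i. (if i \<in> range (to_nat :: 'v \<Rightarrow> nat) then Poly_Mapping.lookup n (from_nat i) else 0) \<noteq> 0} \<subseteq> to_nat ` Poly_Mapping.keys n"
    by (auto simp: in_keys_iff)
  hence "finite {i. (if i \<in> range (to_nat :: 'v \<Rightarrow> nat) then Poly_Mapping.lookup n (from_nat i) else 0) \<noteq> 0}"
    by (rule finite_subset) simp
  thus ?thesis unfolding enc_pm_def by simp
qed

lemma enc_pm_add: "enc_pm (a + b) = enc_pm a + enc_pm b"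
  by (rule poly_mapping_eqI) (simp add: lookup_enc_pm lookup_add)

lemma enc_pm_inj: "inj enc_pm"
proof (rule injI)
  fix a b :: "'v::countable \<Rightarrow>\<^sub>0 nat" assume "enc_pm a = enc_pm b"
  hence ev: "Poly_Mapping.lookup (enc_pm a) (to_nat v) = Poly_Mapping.lookup (enc_pm b) (to_nat v)" for v by simp
  have "Poly_Mapping.lookup a v = Poly_Mapping.lookup b v" for v
    using ev[of v] by (simp add: lookup_enc_pm from_nat_to_nat)
  thus "a = b" by (intro poly_mapping_eqI)
qed

lemma mpoly_mult_nz:
  fixes p q :: "('v::countable, 'k::field) mpoly"
  assumes "p \<noteq> 0" "q \<noteq> 0" shows "p * q \<noteq> 0"
  using mult_nz_gen[where \<phi>="enc_pm :: ('v \<Rightarrow>\<^sub>0 nat) \<Rightarrow> (nat \<Rightarrow>\<^sub>0 nat)", OF enc_pm_inj enc_pm_add assms] .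

lemma mpoly_mult_eq0: "(p::('v::countable, 'k::field) mpoly) * q = 0 \<longleftrightarrow> p = 0 \<or> q = 0"
  using mpoly_mult_nz by auto


abbreviation lk where "lk \<equiv> Poly_Mapping.lookup"
abbreviation ks where "ks \<equiv> Poly_Mapping.keys"

definition le_pm :: "('v \<Rightarrow>\<^sub>0 nat) \<Rightarrow> ('v \<Rightarrow>\<^sub>0 nat) \<Rightarrow> bool" where
  "le_pm a b \<longleftrightarrow> (\<forall>v. lk a v \<le> lk b v)"

lemma le_pm_add: "le_pm a (a + b)" "le_pm b (a + b)"
  by (auto simp: le_pm_def lookup_add)

lemma le_pm_trans: "le_pm a b \<Longrightarrow> le_pm b c \<Longrightarrow> le_pm a c"
  unfolding le_pm_def using order_trans by blast

lemma le_pm_diff: "le_pm m n \<Longrightarrow> m + (n - m) = n"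
  by (rule poly_mapping_eqI) (simp add: le_pm_def lookup_add lookup_minus)

lemma add_diff_pm: "(m + n) - m = (n :: 'v \<Rightarrow>\<^sub>0 nat)"
  by simp

lemma keys_single_mult_sub:
  fixes p :: "('v, 'k::field) mpoly"
  shows "ks (Poly_Mapping.single m c * p) \<subseteq> (+) m ` ks p"
  using keys_mult[of "Poly_Mapping.single m c" p] by (auto split: if_splits)

lemma lookup_single_mult:
  fixes p :: "('v, 'k::field) mpoly"
  shows "lk (Poly_Mapping.single m c * p) (m + n) = c * lk p n"
proof -
  have "lk (Poly_Mapping.single m c * p) (m + n) =
     (\<Sum>l\<in>ks (Poly_Mapping.single m c). \<Sum>q\<in>ks p. (lk (Poly_Mapping.single m c) l * lk p q when l + q = m + n))"
    by (rule lookup_mult_fin)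
  also have "\<dots> = (\<Sum>q\<in>ks p. (c * lk p q when q = n))"
    by (cases "c = 0") (auto simp: when_def)
  also have "\<dots> = c * lk p n"
    by (cases "n \<in> ks p") (auto simp: when_def in_keys_iff)
  finally show ?thesis .
qed

lemma keys_single_mult:
  fixes p :: "('v, 'k::field) mpoly"
  assumes "c \<noteq> 0" shows "ks (Poly_Mapping.single m c * p) = (+) m ` ks p"
proof
  show "ks (Poly_Mapping.single m c * p) \<subseteq> (+) m ` ks p" by (rule keys_single_mult_sub)
  show "(+) m ` ks p \<subseteq> ks (Poly_Mapping.single m c * p)"
    using assms by (auto simp: in_keys_iff lookup_single_mult)
qed

lemma mon_div:
  fixes p :: "('v, 'k::field) mpoly"
  assumes "\<forall>n\<in>ks p. le_pm m n"
  shows "\<exists>h. p = Poly_Mapping.single m 1 * h"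
proof -
  let ?h = "\<Sum>n\<in>ks p. Poly_Mapping.single (n - m) (lk p n)"
  have "Poly_Mapping.single m 1 * ?h = (\<Sum>n\<in>ks p. Poly_Mapping.single (m + (n - m)) (lk p n))"
    by (simp add: sum_distrib_left mult_single)
  also have "\<dots> = (\<Sum>n\<in>ks p. Poly_Mapping.single n (lk p n))"
    using assms by (intro sum.cong refl) (simp add: le_pm_diff)
  also have "\<dots> = p" by (rule pm_expand[symmetric])
  finally show ?thesis by metis
qed

definition restr :: "(('v \<Rightarrow>\<^sub>0 nat) \<Rightarrow> bool) \<Rightarrow> ('v, 'k::field) mpoly \<Rightarrow> ('v, 'k) mpoly" where
  "restr P p = Poly_Mapping.mapp (\<lambda>k c. if P k then c else 0) p"

lemma lookup_restr: "lk (restr P p) k = (if P k then lk p k else 0)"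
  by (auto simp: restr_def lookup_mapp when_def in_keys_iff)

lemma keys_restr: "ks (restr P p) = {k\<in>ks p. P k}"
  by (auto simp: in_keys_iff lookup_restr split: if_splits)

lemma restr_split: "p = restr P p + restr (\<lambda>k. \<not> P k) p"
  by (rule poly_mapping_eqI) (simp add: lookup_add lookup_restr)

lemma keys_diff_sub: "ks (p - q) \<subseteq> ks p \<union> ks (q::('v, 'k::field) mpoly)"
  by (auto simp: in_keys_iff lookup_minus)

lemma keys_sum_sub: "ks (p + q) \<subseteq> ks p \<union> ks (q::('v, 'k::field) mpoly)"
  by (rule keys_add)

definition ind :: "'v::finite set \<Rightarrow> ('v \<Rightarrow>\<^sub>0 nat)" where
  "ind A = Abs_poly_mapping (\<lambda>v. if v \<in> A then 1 else 0)"

lemma lookup_ind: "lk (ind A) v = (if v \<in> A then 1 else 0)"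
proof -
  have "finite {v. (if v \<in> A then 1::nat else 0) \<noteq> 0}" by simp
  thus ?thesis unfolding ind_def by simp
qed

lemma keys_ind: "ks (ind A) = A"
  by (auto simp: in_keys_iff lookup_ind split: if_splits)

lemma ind_insert: "v \<notin> A \<Longrightarrow> ind (insert v A) = Poly_Mapping.single v 1 + ind A"
  by (rule poly_mapping_eqI) (auto simp: lookup_ind lookup_add lookup_single when_def)

lemma ind_union: "A \<inter> B = {} \<Longrightarrow> ind (A \<union> B) = ind A + ind B"
  by (rule poly_mapping_eqI) (auto simp: lookup_ind lookup_add)

lemma prod_Var: "(\<Prod>i\<in>A. Var i) = (Poly_Mapping.single (ind A) 1 :: ('v::finite, 'k::field) mpoly)"
proof -
  have "finite A" by simp
  thus ?thesis
  proof (induction A rule: finite_induct)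
    case empty
    have "ind ({}::'v set) = 0" by (rule poly_mapping_eqI) (simp add: lookup_ind)
    thus ?case by simp
  next
    case (insert x F)
    thus ?case by (simp add: Var_def mult_single ind_insert)
  qed
qed

lemma mdeg_ind: "mdeg (ind A) = card A"
  by (simp add: mdeg_def keys_ind lookup_ind)

lemma single_homog: "(Poly_Mapping.single m c :: ('v, 'k::field) mpoly) \<in> homog (mdeg m)"
  by (auto simp: homog_def split: if_splits)

lemma Var_pow: "(Var i :: ('v, 'k::field) mpoly) ^ k = Poly_Mapping.single (Poly_Mapping.single i k) 1"
  by (induction k) (auto simp: Var_def mult_single single_add[symmetric] add.commute)

section \<open>Ideals\<close>

lemma ideal_0: "is_ideal I \<Longrightarrow> 0 \<in> I" by (simp add: is_ideal_def)
lemma ideal_add: "is_ideal I \<Longrightarrow> a \<in> I \<Longrightarrow> b \<in> I \<Longrightarrow> a + b \<in> I" by (simp add: is_ideal_def)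
lemma ideal_mult: "is_ideal I \<Longrightarrow> a \<in> I \<Longrightarrow> r * a \<in> I" by (simp add: is_ideal_def)
lemma ideal_mult2: "is_ideal I \<Longrightarrow> a \<in> I \<Longrightarrow> a * r \<in> I"
  using ideal_mult[of I a r] by (simp add: mult.commute)
lemma ideal_uminus: "is_ideal I \<Longrightarrow> a \<in> I \<Longrightarrow> - a \<in> I"
  using ideal_mult[of I a "-1"] by simp
lemma ideal_diff: "is_ideal I \<Longrightarrow> a \<in> I \<Longrightarrow> b \<in> I \<Longrightarrow> a - b \<in> I"
  using ideal_add[of I a "-b"] ideal_uminus[of I b] by simp
lemma ideal_sum: "is_ideal I \<Longrightarrow> (\<And>x. x \<in> X \<Longrightarrow> f x \<in> I) \<Longrightarrow> sum f X \<in> I"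
proof (induction X rule: infinite_finite_induct)
  case (insert x F) thus ?case using ideal_add by force
qed (auto simp: ideal_0)

lemma ideal_gen_ideal: "is_ideal (ideal_gen G)"
  unfolding ideal_gen_def is_ideal_def by blast
lemma ideal_gen_sub: "G \<subseteq> ideal_gen G"
  unfolding ideal_gen_def by blast
lemma ideal_gen_least: "is_ideal J \<Longrightarrow> G \<subseteq> J \<Longrightarrow> ideal_gen G \<subseteq> J"
  unfolding ideal_gen_def by blast

lemma prime_one: "is_prime_ideal P \<Longrightarrow> 1 \<notin> P"
proof
  assume P: "is_prime_ideal P" and "1 \<in> P"
  hence "x \<in> P" for x using ideal_mult[of P 1 x] by (simp add: is_prime_ideal_def)
  thus False using P by (auto simp: is_prime_ideal_def)
qed

lemma prime_pow: "is_prime_ideal P \<Longrightarrow> x ^ k \<in> P \<Longrightarrow> x \<in> P"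
proof (induction k)
  case 0 thus ?case using prime_one by auto
next
  case (Suc k)
  hence "x * x ^ k \<in> P" by simp
  hence "x \<in> P \<or> x ^ k \<in> P" using Suc.prems(1) unfolding is_prime_ideal_def by blast
  thus ?case using Suc by blast
qed

lemma prime_prod: "finite X \<Longrightarrow> is_prime_ideal P \<Longrightarrow> (\<And>x. x \<in> X \<Longrightarrow> f x \<notin> P) \<Longrightarrow> prod f X \<notin> P"
proof (induction X rule: finite_induct)
  case empty thus ?case using prime_one by auto
next
  case (insert x F)
  hence "f x \<notin> P" "prod f F \<notin> P" by auto
  hence "f x * prod f F \<notin> P" using insert.prems(1) unfolding is_prime_ideal_def by blast
  thus ?case using insert by simp
qed

lemma ideal_prod_mem: "is_ideal I \<Longrightarrow> finite X \<Longrightarrow> x \<in> X \<Longrightarrow> f x \<in> I \<Longrightarrow> prod f X \<in> I"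
proof -
  assume "is_ideal I" "finite X" "x \<in> X" "f x \<in> I"
  moreover hence "prod f X = f x * prod f (X - {x})" by (simp add: prod.remove)
  ultimately show ?thesis by (simp add: ideal_mult2)
qed

lemma prime_avoid:
  assumes P: "is_prime_ideal P" and fin: "finite X" and id: "\<And>x. x \<in> X \<Longrightarrow> is_ideal (F x)"
    and sub: "(\<Inter>x\<in>X. F x) \<subseteq> P"
  shows "\<exists>x\<in>X. F x \<subseteq> P"
proof (rule ccontr)
  assume "\<not> ?thesis"
  hence "\<forall>x\<in>X. \<exists>a. a \<in> F x \<and> a \<notin> P" by blast
  hence "\<exists>a. \<forall>x\<in>X. a x \<in> F x \<and> a x \<notin> P" by (rule bchoice)
  then obtain a where a0: "\<forall>x\<in>X. a x \<in> F x \<and> a x \<notin> P" by blast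
  hence a: "\<And>x. x \<in> X \<Longrightarrow> a x \<in> F x \<and> a x \<notin> P" by simp
  have "prod a X \<in> F x" if "x \<in> X" for x
    using ideal_prod_mem[OF id[OF that] fin that] a[OF that] by blast
  hence "prod a X \<in> (\<Inter>x\<in>X. F x)" by blast
  hence "prod a X \<in> P" using sub by blast
  moreover have "prod a X \<notin> P" using prime_prod[OF fin P, of a] a by simp
  ultimately show False by blast
qed

lemma prime_eq_inter:
  assumes P: "is_prime_ideal P" and fin: "finite X" and id: "\<And>x. x \<in> X \<Longrightarrow> is_ideal (F x)"
    and eq: "P = (\<Inter>x\<in>X. F x)"
  shows "\<exists>x\<in>X. P = F x"
proof -
  have "(\<Inter>x\<in>X. F x) \<subseteq> P" using eq by simp
  hence "\<exists>x\<in>X. F x \<subseteq> P" using P fin id by (intro prime_avoid)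
  then obtain x where x: "x \<in> X" "F x \<subseteq> P" by blast
  have "P \<subseteq> F x" unfolding eq using x(1) by blast
  thus ?thesis using x by blast
qed

lemma colon_elem_Inter: "colon_elem (\<Inter>x\<in>X. F x) f = (\<Inter>x\<in>X. colon_elem (F x) f)"
  by (auto simp: colon_elem_def)

lemma colon_Inter: "colon (\<Inter>x\<in>X. F x) J = (\<Inter>x\<in>X. colon (F x) J)"
  by (auto simp: colon_def)

lemma colon_elem_prime: "is_prime_ideal P \<Longrightarrow> colon_elem P f = (if f \<in> P then UNIV else P)"
  by (auto simp: colon_elem_def is_prime_ideal_def intro: ideal_mult ideal_mult2)

lemma colon_prime: "is_prime_ideal P \<Longrightarrow> is_ideal J \<Longrightarrow> colon P J = (if J \<subseteq> P then UNIV else P)"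
  by (auto simp: colon_def is_prime_ideal_def intro: ideal_mult ideal_mult2)


definition MI :: "('v \<Rightarrow>\<^sub>0 nat) set \<Rightarrow> ('v, 'k::field) mpoly set" where
  "MI U = {p. ks p \<subseteq> U}"

definition upc :: "('v \<Rightarrow>\<^sub>0 nat) set \<Rightarrow> bool" where
  "upc U \<longleftrightarrow> (\<forall>a b. a \<in> U \<longrightarrow> le_pm a b \<longrightarrow> b \<in> U)"

definition hit :: "'v set \<Rightarrow> ('v \<Rightarrow>\<^sub>0 nat) set" where
  "hit T = {n. ks n \<inter> T \<noteq> {}}"

definition PV :: "'v set \<Rightarrow> ('v, 'k::field) mpoly set" where
  "PV T = MI (hit T)"

lemma le_pm_keys: "le_pm a b \<Longrightarrow> ks a \<subseteq> ks b"
proof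
  fix x assume "le_pm a b" "x \<in> ks a"
  hence "lk a x \<noteq> 0" "lk a x \<le> lk b x" by (auto simp: le_pm_def in_keys_iff)
  thus "x \<in> ks b" by (simp add: in_keys_iff)
qed

lemma keys_add_nat: "ks (a + b) = ks a \<union> ks (b :: 'v \<Rightarrow>\<^sub>0 nat)"
  by (auto simp: in_keys_iff lookup_add)

lemma upc_hit: "upc (hit T)"
  unfolding upc_def hit_def using le_pm_keys by blast

lemma MI_ideal: "upc U \<Longrightarrow> is_ideal (MI U)"
  unfolding is_ideal_def
proof (intro conjI ballI allI)
  assume U: "upc U"
  show "0 \<in> MI U" by (simp add: MI_def)
  fix a b :: "('a, 'b) mpoly" assume "a \<in> MI U" "b \<in> MI U"
  thus "a + b \<in> MI U" unfolding MI_def using keys_add[of a b] by auto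
next
  fix a r :: "('a, 'b) mpoly" assume U: "upc U" and a: "a \<in> MI U"
  have "ks (r * a) \<subseteq> {x + y |x y. x \<in> ks r \<and> y \<in> ks a}" by (rule keys_mult)
  also have "\<dots> \<subseteq> U" using a U unfolding MI_def upc_def by (auto intro: le_pm_add)
  finally show "r * a \<in> MI U" by (simp add: MI_def)
qed

lemma PV_ideal: "is_ideal (PV T)"
  unfolding PV_def by (rule MI_ideal[OF upc_hit])

lemma one_notin_PV: "(1::('v, 'k::field) mpoly) \<notin> PV T"
  by (simp add: PV_def MI_def hit_def)

lemma PV_prime:
  assumes "T \<noteq> {}"
  shows "is_prime_ideal (PV T :: ('v::countable, 'k::field) mpoly set)"
  unfolding is_prime_ideal_def
proof (intro conjI allI impI PV_ideal)
  show "PV T \<noteq> UNIV" using one_notin_PV by blast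
  fix a b :: "('v, 'k) mpoly"
  assume ab: "a * b \<in> PV T"
  show "a \<in> PV T \<or> b \<in> PV T"
  proof (rule ccontr)
    assume "\<not> ?thesis"
    hence na: "a \<notin> PV T" and nb: "b \<notin> PV T" by auto
    let ?H = "hit T"
    define a0 where "a0 = restr (\<lambda>n. n \<notin> ?H) a"
    define a1 where "a1 = restr (\<lambda>n. \<not> n \<notin> ?H) a"
    define b0 where "b0 = restr (\<lambda>n. n \<notin> ?H) b"
    define b1 where "b1 = restr (\<lambda>n. \<not> n \<notin> ?H) b"
    have a_eq: "a = a0 + a1" unfolding a0_def a1_def by (rule restr_split)
    have b_eq: "b = b0 + b1" unfolding b0_def b1_def by (rule restr_split)
    have a1P: "a1 \<in> PV T" by (auto simp: a1_def PV_def MI_def keys_restr)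
    have b1P: "b1 \<in> PV T" by (auto simp: b1_def PV_def MI_def keys_restr)
    have "ks a0 \<noteq> {}" using na by (auto simp: a0_def PV_def MI_def keys_restr)
    hence "a0 \<noteq> 0" by auto
    moreover have "ks b0 \<noteq> {}" using nb by (auto simp: b0_def PV_def MI_def keys_restr)
    hence "b0 \<noteq> 0" by auto
    ultimately have nz: "a0 * b0 \<noteq> 0" by (rule mpoly_mult_nz)
    have "a0 * b0 = a * b - a1 * b - a0 * b1"
      unfolding a_eq b_eq by (simp add: algebra_simps)
    also have "\<dots> \<in> PV T"
    proof -
      have "a1 * b \<in> PV T" by (rule ideal_mult2[OF PV_ideal a1P])
      moreover have "a0 * b1 \<in> PV T" by (rule ideal_mult[OF PV_ideal b1P])
      ultimately show ?thesis using ab by (intro ideal_diff[OF PV_ideal])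
    qed
    finally have inP: "ks (a0 * b0) \<subseteq> ?H" by (simp add: PV_def MI_def)
    have "ks (a0 * b0) \<subseteq> {x + y |x y. x \<in> ks a0 \<and> y \<in> ks b0}" by (rule keys_mult)
    also have "\<dots> \<subseteq> - ?H" by (auto simp: a0_def b0_def keys_restr hit_def keys_add_nat)
    finally have "ks (a0 * b0) = {}" using inP by blast
    thus False using nz by simp
  qed
qed

lemma keys_Var: "ks (Var i :: ('v, 'k::field) mpoly) = {Poly_Mapping.single i 1}"
  by (simp add: Var_def)

lemma Var_in_PV: "(Var i :: ('v, 'k::field) mpoly) \<in> PV T \<longleftrightarrow> i \<in> T"
  by (simp add: PV_def MI_def hit_def keys_Var)

lemma single_in_MI: "(Poly_Mapping.single m c :: ('v, 'k::field) mpoly) \<in> MI U \<longleftrightarrow> c = 0 \<or> m \<in> U"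
  by (simp add: MI_def)

lemma single_in_PV: "(Poly_Mapping.single m c :: ('v, 'k::field) mpoly) \<in> PV T \<longleftrightarrow> c = 0 \<or> ks m \<inter> T \<noteq> {}"
  by (simp add: PV_def MI_def hit_def)

lemma PV_mono: "T \<subseteq> T' \<Longrightarrow> PV T \<subseteq> PV T'"
  by (auto simp: PV_def MI_def hit_def)

lemma Inter_PV_eq: "(\<Inter>e\<in>E. (PV e :: ('v, 'k::field) mpoly set)) = MI {n. vertex_cover E (ks n)}"
  by (auto simp: PV_def MI_def hit_def vertex_cover_def)

lemma min_cover_exists_aux:
  fixes A :: "'v set"
  shows "finite A \<Longrightarrow> vertex_cover E A \<Longrightarrow> \<exists>C\<subseteq>A. min_vertex_cover E C"
proof (induction A rule: finite_psubset_induct)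
  case (psubset A)
  show ?case
  proof (cases "min_vertex_cover E A")
    case True thus ?thesis by (intro exI[of _ A]) simp
  next
    case False
    then obtain C' where C': "C' \<subset> A" "vertex_cover E C'" using psubset.prems
      unfolding min_vertex_cover_def by blast
    then obtain C where "C \<subseteq> C'" "min_vertex_cover E C" using psubset.IH by blast
    moreover have "C \<subseteq> A" using C'(1) \<open>C \<subseteq> C'\<close> by (rule_tac subset_trans) auto
    ultimately show ?thesis by blast
  qed
qed

lemma min_cover_exists:
  fixes A :: "'v::finite set"
  shows "vertex_cover E A \<Longrightarrow> \<exists>C\<subseteq>A. min_vertex_cover E C"
  using min_cover_exists_aux[of A E] by simp

lemma cover_upc: "upc {n. vertex_cover E (ks n)}"
  unfolding upc_def
proof (intro allI impI)
  fix a b assume "a \<in> {n. vertex_cover E (ks n)}" "le_pm a b"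
  thus "b \<in> {n. vertex_cover E (ks n)}" using le_pm_keys[of a b] by (auto simp: vertex_cover_def)
qed

lemma cover_gen_eq: "{\<Prod>i\<in>C. Var i |C. min_vertex_cover E C} =
   {(Poly_Mapping.single (ind C) 1 :: ('v::finite, 'k::field) mpoly) |C. min_vertex_cover E C}"
  by (simp only: prod_Var)

lemma cover_ideal_eq:
  "cover_ideal E = (MI {n. vertex_cover E (ks n)} :: ('v::finite, 'k::field) mpoly set)"
proof
  have gens: "{(Poly_Mapping.single (ind C) 1 :: ('v, 'k) mpoly) |C. min_vertex_cover E C} \<subseteq> MI {n. vertex_cover E (ks n)}"
  proof
    fix x assume "x \<in> {(Poly_Mapping.single (ind C) 1 :: ('v, 'k) mpoly) |C. min_vertex_cover E C}"
    then obtain C where "x = Poly_Mapping.single (ind C) 1" "min_vertex_cover E C" by blast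
    thus "x \<in> MI {n. vertex_cover E (ks n)}"
      by (simp add: MI_def keys_ind min_vertex_cover_def)
  qed
  have "is_ideal (MI {n. vertex_cover E (ks n)} :: ('v, 'k) mpoly set)"
    by (rule MI_ideal[OF cover_upc])
  from ideal_gen_least[OF this gens]
  show "cover_ideal E \<subseteq> (MI {n. vertex_cover E (ks n)} :: ('v, 'k) mpoly set)"
    unfolding cover_ideal_def cover_gen_eq by simp
  show "(MI {n. vertex_cover E (ks n)} :: ('v, 'k) mpoly set) \<subseteq> cover_ideal E"
  proof
    fix p :: "('v, 'k) mpoly" assume p: "p \<in> MI {n. vertex_cover E (ks n)}"
    have "Poly_Mapping.single n (lk p n) \<in> cover_ideal E" if n: "n \<in> ks p" for n
    proof -
      have "vertex_cover E (ks n)" using p n by (auto simp: MI_def)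
      then obtain C where C: "C \<subseteq> ks n" "min_vertex_cover E C" using min_cover_exists by blast
      have le: "le_pm (ind C) n"
        unfolding le_pm_def
      proof
        fix v show "lk (ind C) v \<le> lk n v"
        proof (cases "v \<in> C")
          case True hence "lk n v \<noteq> 0" using C(1) by (auto simp: in_keys_iff)
          thus ?thesis using True by (simp add: lookup_ind)
        next
          case False thus ?thesis by (simp add: lookup_ind)
        qed
      qed
      have "(Poly_Mapping.single (ind C) 1 :: ('v, 'k) mpoly) \<in> {(Poly_Mapping.single (ind C) 1 :: ('v, 'k) mpoly) |C. min_vertex_cover E C}"
        using C(2) by blast
      from subsetD[OF ideal_gen_sub this]
      have g: "(Poly_Mapping.single (ind C) 1 :: ('v, 'k) mpoly) \<in> cover_ideal E"
        by (simp add: cover_ideal_def cover_gen_eq)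
      have eq: "Poly_Mapping.single n (lk p n) = Poly_Mapping.single (n - ind C) (lk p n) * (Poly_Mapping.single (ind C) 1 :: ('v, 'k) mpoly)"
        using le_pm_diff[OF le] by (simp add: mult_single add.commute)
      show ?thesis unfolding eq cover_ideal_def
        by (rule ideal_mult[OF ideal_gen_ideal]) (use g in \<open>simp add: cover_ideal_def\<close>)
    qed
    hence "(\<Sum>n\<in>ks p. Poly_Mapping.single n (lk p n)) \<in> cover_ideal E"
      unfolding cover_ideal_def by (intro ideal_sum[OF ideal_gen_ideal]) auto
    thus "p \<in> cover_ideal E" using pm_expand[of p] by simp
  qed
qed

lemma cover_ideal_Inter: "cover_ideal E = (\<Inter>e\<in>E. (PV e :: ('v::finite, 'k::field) mpoly set))"
  by (simp add: cover_ideal_eq Inter_PV_eq)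


lemma edge_two: "simple_graph E \<Longrightarrow> e \<in> E \<Longrightarrow> \<exists>a b. a \<noteq> b \<and> e = {a, b}"
  unfolding simple_graph_def card_2_iff by blast

lemma edge_ne: "simple_graph E \<Longrightarrow> e \<in> E \<Longrightarrow> e \<noteq> {}"
  using edge_two by fastforce

lemma edge_sub_eq: "simple_graph E \<Longrightarrow> e \<in> E \<Longrightarrow> e' \<in> E \<Longrightarrow> e' \<subseteq> e \<Longrightarrow> e' = e"
  unfolding simple_graph_def
  by (metis card_subset_eq finite.emptyI finite.insertI card_2_iff)

lemma colon_elem_cover:
  assumes G: "simple_graph E"
  shows "colon_elem (cover_ideal E :: ('v::finite, 'k::field) mpoly set) f
       = (\<Inter>e\<in>{e\<in>E. f \<notin> PV e}. PV e)"
proof -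
  have "colon_elem (cover_ideal E :: ('v, 'k) mpoly set) f = (\<Inter>e\<in>E. colon_elem (PV e) f)"
    by (simp add: cover_ideal_Inter colon_elem_Inter)
  also have "\<dots> = (\<Inter>e\<in>E. if f \<in> PV e then UNIV else PV e)"
    by (rule INF_cong) (simp_all add: colon_elem_prime[OF PV_prime[OF edge_ne[OF G]]])
  also have "\<dots> = (\<Inter>e\<in>{e\<in>E. f \<notin> PV e}. PV e)" by auto
  finally show ?thesis .
qed

lemma Ass_cover:
  assumes G: "simple_graph E" and P: "P \<in> Ass (cover_ideal E :: ('v::finite, 'k::field) mpoly set)"
  shows "\<exists>e\<in>E. P = PV e"
proof -
  obtain f where Pp: "is_prime_ideal P" and f: "colon_elem (cover_ideal E) f = P"
    using P by (auto simp: Ass_def)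
  have eq: "P = (\<Inter>e\<in>{e\<in>E. f \<notin> PV e}. PV e)" using f colon_elem_cover[OF G, of f] by simp
  have "\<exists>e\<in>{e\<in>E. f \<notin> PV e}. P = PV e"
    using Pp eq PV_ideal by (intro prime_eq_inter) auto
  thus ?thesis by blast
qed

lemma single_ind_in_PV: "(Poly_Mapping.single (ind A) 1 :: ('v::finite, 'k::field) mpoly) \<in> PV e \<longleftrightarrow> A \<inter> e \<noteq> {}"
  by (simp add: single_in_PV keys_ind)

lemma colon_ind:
  assumes G: "simple_graph E"
  shows "colon_elem (cover_ideal E :: ('v::finite, 'k::field) mpoly set) (Poly_Mapping.single (ind (- B)) 1)
       = (\<Inter>e\<in>{e\<in>E. e \<subseteq> B}. PV e)"
proof -
  have eq: "{e\<in>E. (Poly_Mapping.single (ind (- B)) 1 :: ('v, 'k) mpoly) \<notin> PV e} = {e\<in>E. e \<subseteq> B}"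
    by (auto simp: single_ind_in_PV)
  have "colon_elem (cover_ideal E :: ('v, 'k) mpoly set) (Poly_Mapping.single (ind (- B)) 1)
       = (\<Inter>e\<in>{e\<in>E. (Poly_Mapping.single (ind (- B)) 1 :: ('v, 'k) mpoly) \<notin> PV e}. PV e)"
    by (rule colon_elem_cover[OF G])
  also have "\<dots> = (\<Inter>e\<in>{e\<in>E. e \<subseteq> B}. PV e)" by (simp only: eq)
  finally show ?thesis .
qed

lemma PV_in_Ass:
  assumes G: "simple_graph E" and e: "e \<in> E"
  shows "colon_elem (cover_ideal E :: ('v::finite, 'k::field) mpoly set) (Poly_Mapping.single (ind (- e)) 1) = PV e"
    and "PV e \<in> Ass (cover_ideal E :: ('v::finite, 'k::field) mpoly set)"
proof -
  have "{e'\<in>E. e' \<subseteq> e} = {e}" using e by (auto dest: edge_sub_eq[OF G e])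
  thus c: "colon_elem (cover_ideal E :: ('v, 'k) mpoly set) (Poly_Mapping.single (ind (- e)) 1) = PV e"
    using colon_ind[OF G, of e] by simp
  show "PV e \<in> Ass (cover_ideal E :: ('v::finite, 'k::field) mpoly set)"
    unfolding Ass_def using PV_prime[OF edge_ne[OF G e]] c by blast
qed

lemma card_compl: "card (- (A::'v::finite set)) = card (UNIV :: 'v set) - card A"
  by (simp add: Compl_eq_Diff_UNIV card_Diff_subset)

lemma v_number_le:
  assumes "f \<in> homog d" "P \<in> Ass I" "colon_elem I f = P"
  shows "v_number I \<le> enat d"
  unfolding v_number_def using assms by (intro INF_lower) blast

lemma v_number_at_le:
  assumes "f \<in> homog d" "colon_elem I f = P"
  shows "v_number_at I P \<le> enat d"
  unfolding v_number_at_def using assms by (intro INF_lower) blast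

lemma v_number_le_at:
  assumes "P \<in> Ass I"
  shows "v_number I \<le> v_number_at I P"
  unfolding v_number_def v_number_at_def using assms by (intro INF_superset_mono) auto

lemma dominating:
  assumes G: "simple_graph E"
    and v: "v_number (cover_ideal E :: ('v::finite, 'k::field) mpoly set) = enat (card (UNIV :: 'v set) - 2)"
    and e: "e \<in> E" and k: "k \<notin> e"
  shows "\<exists>e'\<in>E. e' \<noteq> e \<and> e' \<subseteq> insert k e"
proof (rule ccontr)
  assume "\<not> ?thesis"
  hence "{e'\<in>E. e' \<subseteq> insert k e} = {e}" using e by auto
  hence c: "colon_elem (cover_ideal E :: ('v, 'k) mpoly set) (Poly_Mapping.single (ind (- insert k e)) 1) = PV e"
    using colon_ind[OF G, of "insert k e"] by simp
  have ce: "card e = 2" using G e by (simp add: simple_graph_def)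
  have ci: "card (insert k e) = 3" using ce k by (simp add: card_insert_if)
  have "card (insert k e) \<le> card (UNIV :: 'v set)" by (rule card_mono) auto
  hence s3: "card (UNIV :: 'v set) \<ge> 3" using ci by simp
  have hom: "(Poly_Mapping.single (ind (- insert k e)) 1 :: ('v, 'k) mpoly) \<in> homog (card (UNIV :: 'v set) - 3)"
    using single_homog[of "ind (- insert k e)" "1::'k"] by (simp add: mdeg_ind card_compl ci)
  have "v_number (cover_ideal E :: ('v, 'k) mpoly set) \<le> enat (card (UNIV :: 'v set) - 3)"
    using v_number_le[OF hom PV_in_Ass(2)[OF G e] c] .
  thus False using v s3 by simp
qed

theorem part_b:
  assumes G: "simple_graph E"
    and v: "v_number (cover_ideal E :: ('v::finite, 'k::field) mpoly set) = enat (card (UNIV :: 'v set) - 2)"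
    and P: "P \<in> Ass (cover_ideal E :: ('v, 'k) mpoly set)"
  shows "v_number_at (cover_ideal E) P = enat (card (UNIV :: 'v set) - 2)"
proof -
  obtain e where e: "e \<in> E" "P = PV e" using Ass_cover[OF G P] by blast
  have ce: "card e = 2" using G e by (simp add: simple_graph_def)
  have hom: "(Poly_Mapping.single (ind (- e)) 1 :: ('v, 'k) mpoly) \<in> homog (card (UNIV :: 'v set) - 2)"
    using single_homog[of "ind (- e)" "1::'k"] by (simp add: mdeg_ind card_compl ce)
  have "v_number_at (cover_ideal E :: ('v, 'k) mpoly set) P \<le> enat (card (UNIV :: 'v set) - 2)"
    using v_number_at_le[OF hom PV_in_Ass(1)[OF G e(1)]] e(2) by simp
  moreover have "v_number (cover_ideal E :: ('v, 'k) mpoly set) \<le> v_number_at (cover_ideal E) P"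
    by (rule v_number_le_at[OF P])
  ultimately show ?thesis using v by simp
qed

theorem part_c:
  assumes G: "simple_graph E"
    and v: "v_number (cover_ideal E :: ('v::finite, 'k::field) mpoly set) = enat (card (UNIV :: 'v set) - 2)"
    and P: "P \<in> Ass (cover_ideal E :: ('v, 'k) mpoly set)"
  shows "\<exists>g. colon (cover_ideal E) P = {a + h * g | a h. a \<in> (cover_ideal E :: ('v, 'k) mpoly set)}"
proof -
  obtain e where e: "e \<in> E" "P = PV e" using Ass_cover[OF G P] by blast
  define g :: "('v, 'k) mpoly" where "g = Poly_Mapping.single (ind (- e)) 1"
  have sub_iff: "PV e \<subseteq> (PV e' :: ('v, 'k) mpoly set) \<longleftrightarrow> e' = e" if e': "e' \<in> E" for e'
  proof
    assume s: "PV e \<subseteq> (PV e' :: ('v, 'k) mpoly set)"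
    have "e \<subseteq> e'"
    proof
      fix x assume "x \<in> e"
      hence "(Var x :: ('v, 'k) mpoly) \<in> PV e" by (simp add: Var_in_PV)
      hence "(Var x :: ('v, 'k) mpoly) \<in> PV e'" using s by blast
      thus "x \<in> e'" by (simp add: Var_in_PV)
    qed
    thus "e' = e" using edge_sub_eq[OF G e(1) e'] G e e' unfolding simple_graph_def
      by (metis card_subset_eq finite.emptyI finite.insertI card_2_iff)
  qed simp
  have col: "colon (cover_ideal E) P = (\<Inter>e'\<in>E - {e}. (PV e' :: ('v, 'k) mpoly set))"
  proof -
    have "colon (cover_ideal E) P = (\<Inter>e'\<in>E. colon (PV e' :: ('v, 'k) mpoly set) (PV e))"
      by (simp add: cover_ideal_Inter colon_Inter e(2))
    also have "\<dots> = (\<Inter>e'\<in>E. if PV e \<subseteq> (PV e' :: ('v, 'k) mpoly set) then UNIV else PV e')"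
      by (rule INF_cong) (simp_all add: colon_prime[OF PV_prime[OF edge_ne[OF G]] PV_ideal])
    also have "\<dots> = (\<Inter>e'\<in>E - {e}. (PV e' :: ('v, 'k) mpoly set))"
      using sub_iff by auto
    finally show ?thesis .
  qed
  have "(\<Inter>e'\<in>E - {e}. (PV e' :: ('v, 'k) mpoly set)) = {a + h * g | a h. a \<in> cover_ideal E}"
  proof
    show "{a + h * g | a h. a \<in> cover_ideal E} \<subseteq> (\<Inter>e'\<in>E - {e}. (PV e' :: ('v, 'k) mpoly set))"
    proof
      fix x assume "x \<in> {a + h * g | a h. a \<in> cover_ideal E}"
      then obtain a h where x: "x = a + h * g" "a \<in> cover_ideal E" by blast
      have "x \<in> PV e'" if e': "e' \<in> E - {e}" for e'
      proof -
        have "a \<in> PV e'" using x(2) e' by (simp add: cover_ideal_Inter)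
        moreover have "g \<in> PV e'"
        proof -
          have "\<not> e' \<subseteq> e" using e' edge_sub_eq[OF G e(1)] by blast
          thus ?thesis unfolding g_def single_ind_in_PV by blast
        qed
        ultimately show ?thesis unfolding x(1) using PV_ideal by (intro ideal_add ideal_mult)
      qed
      thus "x \<in> (\<Inter>e'\<in>E - {e}. (PV e' :: ('v, 'k) mpoly set))" by blast
    qed
    show "(\<Inter>e'\<in>E - {e}. (PV e' :: ('v, 'k) mpoly set)) \<subseteq> {a + h * g | a h. a \<in> cover_ideal E}"
    proof
      fix p assume p: "p \<in> (\<Inter>e'\<in>E - {e}. (PV e' :: ('v, 'k) mpoly set))"
      define p1 where "p1 = restr (\<lambda>n. ks n \<inter> e = {}) p"
      define p2 where "p2 = restr (\<lambda>n. \<not> ks n \<inter> e = {}) p"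
      have peq: "p = p1 + p2" unfolding p1_def p2_def by (rule restr_split)
      have hitp: "ks n \<inter> e' \<noteq> {}" if "n \<in> ks p" "e' \<in> E - {e}" for n e'
        using p that by (auto simp: PV_def MI_def hit_def)
      have "ks p2 \<subseteq> {n. vertex_cover E (ks n)}"
      proof
        fix n assume n: "n \<in> ks p2"
        hence n': "n \<in> ks p" "ks n \<inter> e \<noteq> {}" by (auto simp: p2_def keys_restr)
        show "n \<in> {n. vertex_cover E (ks n)}"
          unfolding vertex_cover_def using hitp[OF n'(1)] n'(2) by blast
      qed
      hence p2I: "p2 \<in> cover_ideal E" by (simp add: cover_ideal_eq MI_def)
      have "\<forall>n\<in>ks p1. le_pm (ind (- e)) n"
      proof
        fix n assume n: "n \<in> ks p1"
        hence n': "n \<in> ks p" "ks n \<inter> e = {}" by (auto simp: p1_def keys_restr)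
        show "le_pm (ind (- e)) n"
          unfolding le_pm_def
        proof
          fix v show "lk (ind (- e)) v \<le> lk n v"
          proof (cases "v \<in> e")
            case True thus ?thesis by (simp add: lookup_ind)
          next
            case False
            obtain e' where e': "e' \<in> E" "e' \<noteq> e" "e' \<subseteq> insert v e"
              using dominating[OF G v e(1) False] by blast
            have "ks n \<inter> e' \<noteq> {}" using hitp[OF n'(1)] e' by blast
            hence "v \<in> ks n" using e'(3) n'(2) by blast
            hence "lk n v \<noteq> 0" by (simp add: in_keys_iff)
            thus ?thesis using False by (simp add: lookup_ind)
          qed
        qed
      qed
      from mon_div[OF this] obtain h where p1h: "p1 = Poly_Mapping.single (ind (- e)) 1 * h" by blast
      have "p = p2 + h * g" unfolding peq p1h g_def by (simp add: mult.commute add.commute)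
      hence "\<exists>a h'. p = a + h' * g \<and> a \<in> cover_ideal E" using p2I by blast
      thus "p \<in> {a + h * g | a h. a \<in> cover_ideal E}" by simp
    qed
  qed
  hence "colon (cover_ideal E) P = {a + h * g | a h. a \<in> (cover_ideal E :: ('v, 'k) mpoly set)}"
    using col by simp
  thus ?thesis by (rule exI)
qed


section \<open>Degree in a fixed variable y\<close>

definition dy :: "'v \<Rightarrow> ('v, 'k::field) mpoly \<Rightarrow> nat" where
  "dy y p = Max (insert 0 ((\<lambda>n. lk n y) ` ks p))"

definition tp :: "'v \<Rightarrow> ('v, 'k::field) mpoly \<Rightarrow> ('v, 'k) mpoly" where
  "tp y p = restr (\<lambda>n. lk n y = dy y p) p"

definition Dy :: "'v \<Rightarrow> ('v, 'k::field) mpoly set" where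
  "Dy y = {p. \<forall>n\<in>ks p. lk n y = 0}"

lemma dy_ge: "n \<in> ks p \<Longrightarrow> lk n y \<le> dy y p"
  unfolding dy_def by (rule Max_ge) auto

lemma dy_le: "(\<And>n. n \<in> ks p \<Longrightarrow> lk n y \<le> d) \<Longrightarrow> dy y p \<le> d"
  unfolding dy_def by (rule Max.boundedI) auto

lemma dy_attained:
  assumes "p \<noteq> 0" shows "\<exists>n\<in>ks p. lk n y = dy y p"
proof -
  have fin: "finite (insert 0 ((\<lambda>n. lk n y) ` ks p))" by simp
  have "dy y p \<in> insert 0 ((\<lambda>n. lk n y) ` ks p)" unfolding dy_def by (rule Max_in[OF fin]) simp
  moreover have "ks p \<noteq> {}" using assms by simp
  then obtain n0 where n0: "n0 \<in> ks p" by blast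
  ultimately show ?thesis using dy_ge[OF n0, of y] by auto
qed

lemma dy_less:
  assumes "p \<noteq> 0" "\<And>n. n \<in> ks p \<Longrightarrow> lk n y < d" shows "dy y p < d"
  using dy_attained[OF assms(1), of y] assms(2) by force

lemma keys_top: "ks (tp y p) = {n\<in>ks p. lk n y = dy y p}"
  by (simp add: tp_def keys_restr)

lemma top_nz: "p \<noteq> 0 \<Longrightarrow> tp y p \<noteq> 0"
  using dy_attained[of p y] keys_top[of y p] by force

lemma keys_low: "ks (p - tp y p) = {n\<in>ks p. lk n y < dy y p}"
proof -
  have "p - tp y p = restr (\<lambda>n. \<not> lk n y = dy y p) p"
    using restr_split[of p "\<lambda>n. lk n y = dy y p"] unfolding tp_def by (simp add: algebra_simps)
  thus ?thesis using dy_ge[of _ p y] by (force simp: keys_restr)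
qed

lemma keys_mult_y:
  assumes "\<And>n. n \<in> ks a \<Longrightarrow> P (lk n y)" "\<And>n. n \<in> ks b \<Longrightarrow> Q (lk n y)"
  shows "\<forall>n\<in>ks (a * b :: ('v, 'k::field) mpoly). \<exists>i j. P i \<and> Q j \<and> lk n y = i + j"
proof
  fix n assume "n \<in> ks (a * b)"
  then obtain x z where "n = x + z" "x \<in> ks a" "z \<in> ks b" using keys_mult[of a b] by blast
  thus "\<exists>i j. P i \<and> Q j \<and> lk n y = i + j" using assms by (auto simp: lookup_add)
qed

lemma top_mult:
  fixes p q :: "('v::countable, 'k::field) mpoly"
  assumes p: "p \<noteq> 0" and q: "q \<noteq> 0"
  shows "dy y (p * q) = dy y p + dy y q" "tp y (p * q) = tp y p * tp y q"
proof -
  let ?dp = "dy y p" and ?dq = "dy y q"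
  let ?tp = "tp y p" and ?tq = "tp y q"
  define R where "R = ?tp * (q - ?tq) + (p - ?tp) * q"
  have pq: "p * q = ?tp * ?tq + R" unfolding R_def by (simp add: algebra_simps)
  have ktp: "\<And>n. n \<in> ks ?tp \<Longrightarrow> lk n y = ?dp" and ktq: "\<And>n. n \<in> ks ?tq \<Longrightarrow> lk n y = ?dq"
    by (auto simp: keys_top)
  have klp: "\<And>n. n \<in> ks (p - ?tp) \<Longrightarrow> lk n y < ?dp" and klq: "\<And>n. n \<in> ks (q - ?tq) \<Longrightarrow> lk n y < ?dq"
    by (auto simp: keys_low)
  have kq: "\<And>n. n \<in> ks q \<Longrightarrow> lk n y \<le> ?dq" by (rule dy_ge)
  have kT: "\<forall>n\<in>ks (?tp * ?tq). lk n y = ?dp + ?dq"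
    using keys_mult_y[of ?tp "\<lambda>i. i = ?dp" y ?tq "\<lambda>j. j = ?dq"] ktp ktq by auto
  have kR1: "\<forall>n\<in>ks (?tp * (q - ?tq)). lk n y < ?dp + ?dq"
    using keys_mult_y[of ?tp "\<lambda>i. i = ?dp" y "q - ?tq" "\<lambda>j. j < ?dq"] ktp klq by fastforce
  have kR2: "\<forall>n\<in>ks ((p - ?tp) * q). lk n y < ?dp + ?dq"
    using keys_mult_y[of "p - ?tp" "\<lambda>i. i < ?dp" y q "\<lambda>j. j \<le> ?dq"] klp kq by fastforce
  have kR: "\<forall>n\<in>ks R. lk n y < ?dp + ?dq"
    using kR1 kR2 keys_add[of "?tp * (q - ?tq)" "(p - ?tp) * q"] unfolding R_def by blast
  have Tnz: "?tp * ?tq \<noteq> 0" using top_nz[OF p] top_nz[OF q] by (rule mpoly_mult_nz)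
  have lkpq: "lk (p * q) n = lk (?tp * ?tq) n + lk R n" for n by (simp add: pq lookup_add)
  have hi: "lk (p * q) n = lk (?tp * ?tq) n" if "lk n y = ?dp + ?dq" for n
  proof -
    have "n \<notin> ks R" using kR that by auto
    thus ?thesis by (simp add: lkpq in_keys_iff)
  qed
  have kpq: "\<And>n. n \<in> ks (p * q) \<Longrightarrow> lk n y \<le> ?dp + ?dq"
  proof -
    fix n assume "n \<in> ks (p * q)"
    hence "n \<in> ks (?tp * ?tq) \<or> n \<in> ks R" using keys_add[of "?tp * ?tq" R] pq by auto
    thus "lk n y \<le> ?dp + ?dq" using kT kR by force
  qed
  have "ks (?tp * ?tq) \<noteq> {}" using Tnz by simp
  then obtain n0 where n0: "n0 \<in> ks (?tp * ?tq)" by blast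
  have "n0 \<in> ks (p * q)" using hi[of n0] kT n0 by (simp add: in_keys_iff)
  hence "?dp + ?dq \<le> dy y (p * q)" using dy_ge[of n0 "p * q" y] kT n0 by simp
  moreover have "dy y (p * q) \<le> ?dp + ?dq" by (rule dy_le[OF kpq])
  ultimately show d: "dy y (p * q) = ?dp + ?dq" by simp
  show "tp y (p * q) = ?tp * ?tq"
  proof (rule poly_mapping_eqI)
    fix n
    show "lk (tp y (p * q)) n = lk (?tp * ?tq) n"
    proof (cases "lk n y = ?dp + ?dq")
      case True thus ?thesis by (simp add: tp_def lookup_restr d hi)
    next
      case False
      hence "n \<notin> ks (?tp * ?tq)" using kT by auto
      thus ?thesis using False by (simp add: tp_def lookup_restr d in_keys_iff)
    qed
  qed
qed

lemma Dy_dy: "p \<in> Dy y \<Longrightarrow> dy y p = 0"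
  unfolding Dy_def by (rule antisym[OF dy_le]) auto

lemma Dy_top: "p \<in> Dy y \<Longrightarrow> tp y p = p"
proof (intro poly_mapping_eqI)
  fix k assume p: "p \<in> Dy y"
  show "lk (tp y p) k = lk p k"
  proof (cases "k \<in> ks p")
    case True thus ?thesis using p Dy_dy[OF p] by (simp add: tp_def lookup_restr Dy_def)
  next
    case False thus ?thesis by (simp add: tp_def lookup_restr in_keys_iff)
  qed
qed

lemma dy0_Dy: "dy y p = 0 \<Longrightarrow> p \<in> Dy y"
  unfolding Dy_def using dy_ge[of _ p y] by fastforce

lemma Dy_mult: "p \<in> Dy y \<Longrightarrow> q \<in> Dy y \<Longrightarrow> p * q \<in> Dy y"
  unfolding Dy_def using keys_mult_y[of p "\<lambda>i. i = 0" y q "\<lambda>j. j = 0"] by auto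

lemma Dy_pow: "p \<in> Dy y \<Longrightarrow> p ^ k \<in> Dy y"
proof (induction k)
  case 0 show ?case by (simp add: Dy_def)
next
  case (Suc k) thus ?case by (simp add: Dy_mult)
qed

lemma Ypow_dy: "dy y (Poly_Mapping.single (Poly_Mapping.single y e) (1::'k::field)) = e"
proof (rule antisym[OF dy_le])
  have "Poly_Mapping.single y e \<in> ks (Poly_Mapping.single (Poly_Mapping.single y e) (1::'k))" by simp
  from dy_ge[OF this, of y] show "e \<le> dy y (Poly_Mapping.single (Poly_Mapping.single y e) (1::'k::field))" by simp
qed simp

lemma Ypow_top: "tp y (Poly_Mapping.single (Poly_Mapping.single y e) (1::'k::field)) = Poly_Mapping.single (Poly_Mapping.single y e) 1"
  unfolding tp_def Ypow_dy by (intro poly_mapping_eqI) (auto simp: lookup_restr lookup_single when_def)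

lemma top_decomp:
  fixes p :: "('v::countable, 'k::field) mpoly"
  assumes "p \<noteq> 0"
  shows "\<exists>c. c \<in> Dy y \<and> c \<noteq> 0 \<and> tp y p = Poly_Mapping.single (Poly_Mapping.single y (dy y p)) 1 * c"
proof -
  let ?m = "Poly_Mapping.single y (dy y p)"
  have "\<forall>n\<in>ks (tp y p). le_pm ?m n"
    by (auto simp: keys_top le_pm_def lookup_single when_def)
  then obtain c where c: "tp y p = Poly_Mapping.single ?m 1 * c" using mon_div by blast
  have "\<forall>n\<in>ks c. lk n y = 0"
  proof
    fix n assume "n \<in> ks c"
    hence "?m + n \<in> ks (tp y p)" using keys_single_mult[of "1::'k" ?m c] c by simp
    thus "lk n y = 0" by (simp add: keys_top lookup_add)
  qed
  hence "c \<in> Dy y" by (simp add: Dy_def)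
  moreover have "c \<noteq> 0" using c top_nz[OF assms, of y] by auto
  ultimately show ?thesis using c by blast
qed


lemma mpoly_pow_nz: "(c::('v::countable, 'k::field) mpoly) \<noteq> 0 \<Longrightarrow> c ^ k \<noteq> 0"
  by (induction k) (auto simp: mpoly_mult_nz)

lemma single_nz: "(c::'k::field) \<noteq> 0 \<Longrightarrow> (Poly_Mapping.single m c :: ('v, 'k) mpoly) \<noteq> 0"
proof
  assume "c \<noteq> 0" "(Poly_Mapping.single m c :: ('v, 'k) mpoly) = 0"
  hence "lk (Poly_Mapping.single m c :: ('v, 'k) mpoly) m = lk 0 m" by simp
  thus False using \<open>c \<noteq> 0\<close> by simp
qed

lemma chain2:
  fixes Q1 Q2 :: "('v::countable, 'k::field) mpoly set"
  assumes P1: "is_prime_ideal Q1" and P2: "is_prime_ideal Q2" and sub: "Q1 \<subseteq> Q2"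
    and ne: "Q1 \<noteq> Q2" and nz: "Q1 \<noteq> {0}"
    and avoid: "\<And>p. p \<in> Q2 \<Longrightarrow> p \<in> Dy y \<Longrightarrow> p = 0"
  shows False
proof -
  have id1: "is_ideal Q1" and id2: "is_ideal Q2" using P1 P2 by (auto simp: is_prime_ideal_def)
  obtain f0 where f0: "f0 \<in> Q1" "f0 \<noteq> 0" using nz ideal_0[OF id1] by blast
  obtain f where f: "f \<in> Q1 \<and> f \<noteq> 0" and fmin: "\<And>f'. f' \<in> Q1 \<and> f' \<noteq> 0 \<Longrightarrow> dy y f \<le> dy y f'"
    using ex_has_least_nat[of "\<lambda>f. f \<in> Q1 \<and> f \<noteq> 0" f0 "dy y"] f0 by blast
  obtain g where g: "g \<in> Q2" "g \<notin> Q1" using sub ne by blast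
  define J where "J = {u * f + w * g | u w. True}"
  have JQ2: "p \<in> Q2" if pJ: "p \<in> J" for p
  proof -
    obtain u w where "p = u * f + w * g" using pJ J_def by blast
    moreover have "f \<in> Q2" using f sub by blast
    ultimately show ?thesis using g(1) id2 by (simp add: ideal_add ideal_mult)
  qed
  have fJ: "f \<in> J" unfolding J_def by (rule CollectI, rule exI[of _ 1], rule exI[of _ 0]) simp
  have gJ: "g \<in> J" unfolding J_def by (rule CollectI, rule exI[of _ 0], rule exI[of _ 1]) simp
  have Jlin: "a * p - b * q \<in> J" if pJ: "p \<in> J" and qJ: "q \<in> J" for a b p q
  proof -
    obtain u1 w1 where 1: "p = u1 * f + w1 * g" using pJ J_def by blast
    obtain u2 w2 where 2: "q = u2 * f + w2 * g" using qJ J_def by blast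
    have "a * p - b * q = (a * u1 - b * u2) * f + (a * w1 - b * w2) * g"
      unfolding 1 2 by (simp add: algebra_simps)
    thus ?thesis unfolding J_def by blast
  qed
  obtain h where h: "h \<in> J \<and> h \<noteq> 0" and hmin: "\<And>h'. h' \<in> J \<and> h' \<noteq> 0 \<Longrightarrow> dy y h \<le> dy y h'"
    using ex_has_least_nat[of "\<lambda>h. h \<in> J \<and> h \<noteq> 0" f "dy y"] fJ f by blast
  define d0 where "d0 = dy y h"
  have d0pos: "d0 \<noteq> 0"
  proof
    assume "d0 = 0"
    hence "h \<in> Dy y" unfolding d0_def by (rule dy0_Dy)
    thus False using avoid[OF JQ2] h by blast
  qed
  obtain c where c: "c \<in> Dy y" "c \<noteq> 0" and tph: "tp y h = Poly_Mapping.single (Poly_Mapping.single y d0) 1 * c"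
    using top_decomp[of h y] h unfolding d0_def by blast
  have ck: "c ^ k \<notin> Q1" for k
  proof
    assume "c ^ k \<in> Q1"
    hence "c ^ k \<in> Q2" using sub by blast
    hence "c ^ k = 0" using avoid Dy_pow[OF c(1)] by blast
    thus False using mpoly_pow_nz[OF c(2)] by blast
  qed
  have red: "\<exists>k q. c ^ k * p = q * h" if "p \<in> J" for p
    using that
  proof (induction "dy y p" arbitrary: p rule: less_induct)
    case less
    show ?case
    proof (cases "p = 0")
      case True thus ?thesis by (intro exI[of _ 0] exI[of _ 0]) simp
    next
      case False
      have ge: "d0 \<le> dy y p" unfolding d0_def using hmin less.prems False by blast
      obtain cp where cp: "cp \<in> Dy y" "cp \<noteq> 0" and tpp: "tp y p = Poly_Mapping.single (Poly_Mapping.single y (dy y p)) 1 * cp"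
        using top_decomp[OF False, of y] by blast
      define e where "e = dy y p - d0"
      define Y where "Y = (\<lambda>k. Poly_Mapping.single (Poly_Mapping.single y k) (1::'k) :: ('v, 'k) mpoly)"
      define X where "X = cp * Y e"
      define A where "A = c * p"
      define B where "B = X * h"
      have Ynz: "Y k \<noteq> 0" for k unfolding Y_def by (rule single_nz) simp
      have YY: "Y e * Y d0 = Y (dy y p)" using ge by (simp add: Y_def e_def mult_single single_add[symmetric])
      have Xnz: "X \<noteq> 0" unfolding X_def using cp(2) Ynz by (rule mpoly_mult_nz)
      have dyA: "dy y A = dy y p" unfolding A_def using top_mult(1)[OF c(2) False, of y] Dy_dy[OF c(1)] by simp
      have tpA: "tp y A = c * (Y (dy y p) * cp)" unfolding A_def using top_mult(2)[OF c(2) False, of y] Dy_top[OF c(1)] tpp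
        by (simp add: Y_def)
      have dyX: "dy y X = e" and tpX: "tp y X = X"
        unfolding X_def using top_mult[OF cp(2) Ynz[of e], of y] Dy_dy[OF cp(1)] Dy_top[OF cp(1)]
        by (simp_all add: Y_def Ypow_dy Ypow_top)
      have dyB: "dy y B = dy y p" unfolding B_def using top_mult(1)[OF Xnz h[THEN conjunct2], of y] dyX ge
        by (simp add: d0_def[symmetric] e_def)
      have tpB: "tp y B = X * (Y d0 * c)" unfolding B_def using top_mult(2)[OF Xnz h[THEN conjunct2], of y] tpX tph
        by (simp add: Y_def)
      have tAB: "tp y A = tp y B" unfolding tpA tpB X_def using YY
        by (metis mult.assoc mult.commute)
      define p' where "p' = A - B"
      have p'J: "p' \<in> J" unfolding p'_def A_def B_def using Jlin[OF less.prems h[THEN conjunct1]] .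
      have p'eq: "p' = (A - tp y A) - (B - tp y B)" unfolding p'_def using tAB by simp
      have kp': "lk n y < dy y p" if "n \<in> ks p'" for n
      proof -
        have "n \<in> ks (A - tp y A) \<or> n \<in> ks (B - tp y B)" using that p'eq keys_diff_sub by blast
        thus ?thesis using dyA dyB by (auto simp: keys_low)
      qed
      show ?thesis
      proof (cases "p' = 0")
        case True
        hence "c ^ 1 * p = X * h" unfolding p'_def A_def B_def by simp
        thus ?thesis by blast
      next
        case False
        have "dy y p' < dy y p" by (rule dy_less[OF False kp'])
        then obtain k q where kq: "c ^ k * p' = q * h" using less.hyps p'J by blast
        have "c ^ Suc k * p = c ^ k * (p' + B)" unfolding p'_def A_def by (simp add: algebra_simps)
        also have "\<dots> = (q + c ^ k * X) * h" unfolding B_def using kq by (simp add: algebra_simps)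
        finally show ?thesis by blast
      qed
    qed
  qed
  obtain k q where kq: "c ^ k * f = q * h" using red[OF fJ] by blast
  obtain k' q' where kq': "c ^ k' * g = q' * h" using red[OF gJ] by blast
  show False
  proof (cases "h \<in> Q1")
    case True
    hence "c ^ k' * g \<in> Q1" unfolding kq' by (rule ideal_mult[OF id1])
    hence "c ^ k' \<in> Q1 \<or> g \<in> Q1" using P1 unfolding is_prime_ideal_def by blast
    thus False using ck g by blast
  next
    case False
    have "q * h \<in> Q1" unfolding kq[symmetric] using f by (intro ideal_mult[OF id1]) auto
    hence qQ: "q \<in> Q1" using P1 False unfolding is_prime_ideal_def by blast
    have ckf: "c ^ k * f \<noteq> 0" using mpoly_pow_nz[OF c(2)] f by (simp add: mpoly_mult_nz)
    hence qnz: "q \<noteq> 0" and hnz: "h \<noteq> 0" unfolding kq by auto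
    have "dy y (c ^ k * f) = dy y f"
      using top_mult(1)[OF mpoly_pow_nz[OF c(2)] conjunct2[OF f], of y] Dy_dy[OF Dy_pow[OF c(1)]] by simp
    moreover have "dy y (q * h) = dy y q + d0" using top_mult(1)[OF qnz hnz, of y] d0_def by simp
    ultimately have "dy y q < dy y f" using kq d0pos by simp
    moreover have "dy y f \<le> dy y q" using fmin qQ qnz by blast
    ultimately show False by simp
  qed
qed


lemma var_in:
  fixes Q :: "('v::countable, 'k::field) mpoly set"
  assumes ab: "a \<noteq> b" and Q: "is_prime_ideal Q" and sub: "Q \<subseteq> PV {a, b}"
    and ex: "p \<in> Q" "p \<in> Dy b" "p \<noteq> 0"
  shows "Var a \<in> Q"
proof -
  have ka: "lk n a \<noteq> 0" if n: "n \<in> ks p" for n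
  proof -
    have "n \<in> hit {a, b}" using ex(1) sub n by (auto simp: PV_def MI_def)
    moreover have "lk n b = 0" using ex(2) n by (simp add: Dy_def)
    ultimately show ?thesis by (auto simp: hit_def in_keys_iff)
  qed
  define k0 where "k0 = Min ((\<lambda>n. lk n a) ` ks p)"
  have "ks p \<noteq> {}" using ex(3) by simp
  hence "k0 \<in> (\<lambda>n. lk n a) ` ks p" unfolding k0_def by (intro Min_in) auto
  then obtain n1 where n1: "n1 \<in> ks p" "lk n1 a = k0" by blast
  have kmin: "k0 \<le> lk n a" if "n \<in> ks p" for n unfolding k0_def using that by (intro Min_le) auto
  define m where "m = Poly_Mapping.single a k0"
  have "\<forall>n\<in>ks p. le_pm m n"
    by (auto simp: le_pm_def m_def lookup_single when_def kmin)
  then obtain p' where pp': "p = Poly_Mapping.single m 1 * p'" using mon_div by blast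
  have "n1 \<in> (+) m ` ks p'" using n1(1) keys_single_mult[of "1::'k" m p'] pp' by simp
  then obtain n1' where n1': "n1' \<in> ks p'" "n1 = m + n1'" by blast
  have "lk n1' a = 0" using n1(2) n1'(2) by (simp add: m_def lookup_add)
  moreover have "lk n1' b = 0"
  proof -
    have "lk n1 b = 0" using ex(2) n1(1) by (simp add: Dy_def)
    thus ?thesis using n1'(2) ab by (simp add: m_def lookup_add lookup_single)
  qed
  ultimately have "n1' \<notin> hit {a, b}" by (auto simp: hit_def in_keys_iff)
  hence "p' \<notin> PV {a, b}" using n1'(1) by (auto simp: PV_def MI_def)
  hence "p' \<notin> Q" using sub by blast
  moreover have "Poly_Mapping.single m 1 * p' \<in> Q" using pp' ex(1) by simp
  ultimately have "Poly_Mapping.single m 1 \<in> Q" using Q unfolding is_prime_ideal_def by blast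
  hence "Var a ^ k0 \<in> Q" by (simp add: Var_pow m_def)
  thus ?thesis using prime_pow[OF Q] by blast
qed

lemma PV2_sub:
  fixes Q :: "('v, 'k::field) mpoly set"
  assumes Q: "is_ideal Q" and a: "Var a \<in> Q" and b: "Var b \<in> Q"
  shows "PV {a, b} \<subseteq> Q"
proof
  fix p :: "('v, 'k) mpoly" assume p: "p \<in> PV {a, b}"
  define pa where "pa = restr (\<lambda>n. a \<in> ks n) p"
  define pb where "pb = restr (\<lambda>n. \<not> a \<in> ks n) p"
  have peq: "p = pa + pb" unfolding pa_def pb_def by (rule restr_split)
  have "\<forall>n\<in>ks pa. le_pm (Poly_Mapping.single a 1) n"
    by (auto simp: pa_def keys_restr le_pm_def lookup_single when_def in_keys_iff)
  then obtain ha where ha: "pa = Var a * ha" using mon_div unfolding Var_def by blast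
  have "\<forall>n\<in>ks pb. le_pm (Poly_Mapping.single b 1) n"
  proof
    fix n assume n: "n \<in> ks pb"
    hence "n \<in> ks p" "a \<notin> ks n" by (auto simp: pb_def keys_restr)
    hence "b \<in> ks n" using p by (auto simp: PV_def MI_def hit_def)
    thus "le_pm (Poly_Mapping.single b 1) n" by (auto simp: le_pm_def lookup_single when_def in_keys_iff)
  qed
  then obtain hb where hb: "pb = Var b * hb" using mon_div unfolding Var_def by blast
  show "p \<in> Q" unfolding peq ha hb using Q a b by (intro ideal_add ideal_mult2)
qed

lemma height_PV_le:
  assumes ab: "a \<noteq> b"
  shows "prime_height (PV {a, b} :: ('v::countable, 'k::field) mpoly set) \<le> 2"
  unfolding prime_height_def
proof (rule SUP_least)
  fix n assume "n \<in> {n. \<exists>c::nat \<Rightarrow> ('v, 'k) mpoly set. c n = PV {a, b} \<and> (\<forall>i\<le>n. is_prime_ideal (c i)) \<and> (\<forall>i<n. c i \<subset> c (Suc i))}"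
  then obtain c :: "nat \<Rightarrow> ('v, 'k) mpoly set" where cn: "c n = PV {a, b}" and pr: "\<forall>i\<le>n. is_prime_ideal (c i)"
    and inc: "\<forall>i<n. c i \<subset> c (Suc i)" by blast
  show "enat n \<le> 2"
  proof (rule ccontr)
    assume "\<not> enat n \<le> 2"
    hence n3: "n \<ge> 3" by (simp add: numeral_eq_enat)
    define j where "j = n - 3"
    have nj: "n = Suc (Suc (Suc j))" using n3 by (simp add: j_def)
    have Q0: "c j \<subset> c (Suc j)" using inc[rule_format, of j] nj by simp
    have Q1: "c (Suc j) \<subset> c (Suc (Suc j))" using inc[rule_format, of "Suc j"] nj by simp
    have Q2: "c (Suc (Suc j)) \<subset> PV {a, b}" using inc[rule_format, of "Suc (Suc j)"] nj cn by simp
    have le: "j \<le> n" "Suc j \<le> n" "Suc (Suc j) \<le> n" using nj by auto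
    have p0: "is_prime_ideal (c j)" using pr le(1) by blast
    have p1: "is_prime_ideal (c (Suc j))" using pr le(2) by blast
    have p2: "is_prime_ideal (c (Suc (Suc j)))" using pr le(3) by blast
    have Q1s: "c (Suc j) \<subseteq> c (Suc (Suc j))" and Q1n: "c (Suc j) \<noteq> c (Suc (Suc j))" using Q1 by auto
    have Q2s: "c (Suc (Suc j)) \<subseteq> PV {a, b}" using Q2 by auto
    have nz: "c (Suc j) \<noteq> {0}"
    proof
      assume z: "c (Suc j) = {0}"
      have "is_ideal (c j)" using p0 by (simp add: is_prime_ideal_def)
      hence 0: "0 \<in> c j" by (rule ideal_0)
      have s1: "c j \<subseteq> {0}" and s2: "c j \<noteq> {0}" using Q0 unfolding z by auto
      have "{0} \<subseteq> c j" using 0 by simp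
      thus False using s1 s2 by (rule_tac s2[THEN notE], rule_tac subset_antisym) auto
    qed
    have exb: "\<exists>p\<in>c (Suc (Suc j)). p \<in> Dy b \<and> p \<noteq> 0"
    proof (rule ccontr)
      assume "\<not> ?thesis"
      hence "\<And>p. p \<in> c (Suc (Suc j)) \<Longrightarrow> p \<in> Dy b \<Longrightarrow> p = 0" by blast
      from chain2[OF p1 p2 Q1s Q1n nz this] show False .
    qed
    have exa: "\<exists>p\<in>c (Suc (Suc j)). p \<in> Dy a \<and> p \<noteq> 0"
    proof (rule ccontr)
      assume "\<not> ?thesis"
      hence "\<And>p. p \<in> c (Suc (Suc j)) \<Longrightarrow> p \<in> Dy a \<Longrightarrow> p = 0" by blast
      from chain2[OF p1 p2 Q1s Q1n nz this] show False .
    qed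
    obtain pb where pb: "pb \<in> c (Suc (Suc j))" "pb \<in> Dy b" "pb \<noteq> 0" using exb by blast
    have "Var a \<in> c (Suc (Suc j))" by (rule var_in[OF ab p2 Q2s pb])
    moreover have "Var b \<in> c (Suc (Suc j))"
    proof -
      obtain pa where pa: "pa \<in> c (Suc (Suc j))" "pa \<in> Dy a" "pa \<noteq> 0" using exa by blast
      have "{a, b} = {b, a}" by auto
      hence "c (Suc (Suc j)) \<subseteq> PV {b, a}" using Q2s by simp
      thus ?thesis by (rule var_in[OF ab[symmetric] p2 _ pa])
    qed
    ultimately have "PV {a, b} \<subseteq> c (Suc (Suc j))"
      using p2 by (intro PV2_sub) (auto simp: is_prime_ideal_def)
    thus False using Q2 by blast
  qed
qed


lemma zero_prime: "is_prime_ideal ({0} :: ('v::countable, 'k::field) mpoly set)"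
proof -
  have "(1::('v, 'k) mpoly) \<notin> {0}" by simp
  hence "({0} :: ('v, 'k) mpoly set) \<noteq> UNIV" by blast
  thus ?thesis unfolding is_prime_ideal_def is_ideal_def by (auto simp: mpoly_mult_eq0)
qed

lemma height_PV_ge:
  fixes P :: "('v::countable, 'k::field) mpoly set"
  assumes ab: "a \<noteq> b" and P: "is_prime_ideal P" and sub: "PV {a, b} \<subseteq> P"
  shows "2 \<le> prime_height P"
proof -
  define c :: "nat \<Rightarrow> ('v, 'k) mpoly set" where "c = (\<lambda>i. if i = 0 then {0} else if i = 1 then PV {a} else P)"
  have pr: "\<forall>i\<le>2. is_prime_ideal (c i)"
    using zero_prime PV_prime[of "{a}"] P by (auto simp: c_def)
  have Va: "(Var a :: ('v, 'k) mpoly) \<in> PV {a}" by (simp add: Var_in_PV)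
  have Vb: "(Var b :: ('v, 'k) mpoly) \<notin> PV {a}" using ab by (simp add: Var_in_PV)
  have "(Var a :: ('v, 'k) mpoly) \<noteq> 0" unfolding Var_def by (rule single_nz) simp
  moreover have "(0 :: ('v, 'k) mpoly) \<in> PV {a}" by (rule ideal_0[OF PV_ideal])
  ultimately have c01: "c 0 \<subset> c 1" using Va by (auto simp: c_def)
  have "PV {a} \<subseteq> (PV {a, b} :: ('v, 'k) mpoly set)" by (rule PV_mono) auto
  moreover have "(Var b :: ('v, 'k) mpoly) \<in> P" using sub by (auto simp: Var_in_PV)
  ultimately have c12: "c 1 \<subset> c 2" using sub Vb by (auto simp: c_def)
  have inc: "\<forall>i<2. c i \<subset> c (Suc i)"
  proof (intro allI impI)
    fix i :: nat assume "i < 2"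
    hence "i = 0 \<or> i = 1" by auto
    thus "c i \<subset> c (Suc i)" using c01 c12 by (auto simp: numeral_2_eq_2)
  qed
  have "c 2 = P" by (simp add: c_def)
  hence "2 \<in> {n. \<exists>c::nat \<Rightarrow> ('v, 'k) mpoly set. c n = P \<and> (\<forall>i\<le>n. is_prime_ideal (c i)) \<and> (\<forall>i<n. c i \<subset> c (Suc i))}"
    using pr inc by blast
  hence "enat 2 \<le> prime_height P" unfolding prime_height_def by (rule SUP_upper)
  thus ?thesis by (simp add: numeral_eq_enat)
qed

lemma cover_height:
  assumes G: "simple_graph E" and ne: "E \<noteq> {}"
  shows "height (cover_ideal E :: ('v::finite, 'k::field) mpoly set) = 2"
proof -
  let ?I = "cover_ideal E :: ('v, 'k) mpoly set"
  have finE: "finite E" by (rule finite_subset[of E "Pow UNIV"]) auto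
  have ge: "2 \<le> prime_height P" if P: "is_prime_ideal P" "?I \<subseteq> P" for P
  proof -
    have "\<exists>e\<in>E. PV e \<subseteq> P"
      using P(2) unfolding cover_ideal_Inter by (intro prime_avoid[OF P(1) finE PV_ideal])
    then obtain e where e: "e \<in> E" "PV e \<subseteq> P" by blast
    obtain a b where ab: "a \<noteq> b" "e = {a, b}" using edge_two[OF G e(1)] by blast
    show ?thesis using height_PV_ge[OF ab(1) P(1)] e(2) ab(2) by simp
  qed
  obtain e where e: "e \<in> E" using ne by blast
  obtain a b where ab: "a \<noteq> b" "e = {a, b}" using edge_two[OF G e] by blast
  have Pe: "is_prime_ideal (PV e :: ('v, 'k) mpoly set)" by (rule PV_prime) (simp add: ab)
  have Ie: "?I \<subseteq> PV e" using e by (auto simp: cover_ideal_Inter)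
  have "height ?I \<le> prime_height (PV e :: ('v, 'k) mpoly set)"
    unfolding height_def using Pe Ie by (intro INF_lower) blast
  also have "\<dots> \<le> 2" unfolding ab(2) by (rule height_PV_le[OF ab(1)])
  finally have le: "height ?I \<le> 2" .
  have "2 \<le> height ?I" unfolding height_def using ge by (intro INF_greatest) blast
  with le show ?thesis by simp
qed


lemma compl_single_cover: "simple_graph E \<Longrightarrow> vertex_cover E (- {v})"
  unfolding vertex_cover_def simple_graph_def
proof
  fix e assume "\<forall>e\<in>E. card e = 2" "e \<in> E"
  then obtain x y where "e = {x, y}" "x \<noteq> y" by (auto simp: card_2_iff)
  thus "e \<inter> - {v} \<noteq> {}" by auto
qed

lemma min_covers_disjoint_compl:
  assumes G: "simple_graph E"
    and dom: "\<And>e k. e \<in> E \<Longrightarrow> k \<notin> e \<Longrightarrow> \<exists>e'\<in>E. e' \<noteq> e \<and> e' \<subseteq> insert k e"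
    and C: "min_vertex_cover E C" and C': "min_vertex_cover E C'" and ne: "C \<noteq> C'"
  shows "- C \<subseteq> C'"
proof
  fix v assume "v \<in> - C"
  hence vC: "v \<notin> C" by simp
  show "v \<in> C'"
  proof (rule ccontr)
    assume vC': "v \<notin> C'"
    have "\<not> C' \<subseteq> C"
    proof
      assume "C' \<subseteq> C"
      hence "C' \<subset> C" using ne by blast
      thus False using C C' by (auto simp: min_vertex_cover_def)
    qed
    then obtain w where w: "w \<in> C'" "w \<notin> C" by blast
    have "\<not> vertex_cover E (C' - {w})" using C' w(1) by (auto simp: min_vertex_cover_def)
    then obtain e0 where e0: "e0 \<in> E" "e0 \<inter> (C' - {w}) = {}" by (auto simp: vertex_cover_def)
    have "e0 \<inter> C' \<noteq> {}" using C' e0(1) by (auto simp: min_vertex_cover_def vertex_cover_def)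
    hence we0: "w \<in> e0" using e0(2) by blast
    obtain y where y: "e0 = {w, y}" "y \<noteq> w" using edge_two[OF G e0(1)] we0 by blast
    have yC': "y \<notin> C'" using e0(2) y by blast
    have "e0 \<inter> C \<noteq> {}" using C e0(1) by (auto simp: min_vertex_cover_def vertex_cover_def)
    hence yC: "y \<in> C" using y w(2) by blast
    have vy: "v \<noteq> y" using yC vC by blast
    have vw: "v \<noteq> w" using w(1) vC' by blast
    have "v \<notin> e0" using y vy vw by blast
    then obtain e' where e': "e' \<in> E" "e' \<noteq> e0" "e' \<subseteq> insert v e0" using dom[OF e0(1)] by blast
    have "e' \<inter> C \<noteq> {}" using C e'(1) by (auto simp: min_vertex_cover_def vertex_cover_def)
    hence "y \<in> e'" using e'(3) y vC w(2) by blast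
    moreover have "e' \<inter> C' \<noteq> {}" using C' e'(1) by (auto simp: min_vertex_cover_def vertex_cover_def)
    hence "w \<in> e'" using e'(3) y vC' yC' by blast
    ultimately have "e0 \<subseteq> e'" using y by blast
    hence "e0 = e'" using edge_sub_eq[OF G e'(1) e0(1)] by blast
    thus False using e'(2) by simp
  qed
qed

lemma gen_in_cover: "min_vertex_cover E C \<Longrightarrow>
   (Poly_Mapping.single (ind C) 1 :: ('v::finite, 'k::field) mpoly) \<in> cover_ideal E"
proof -
  assume C: "min_vertex_cover E C"
  hence "(Poly_Mapping.single (ind C) 1 :: ('v, 'k) mpoly) \<in> {(Poly_Mapping.single (ind C) 1 :: ('v, 'k) mpoly) |C. min_vertex_cover E C}"
    by blast
  from subsetD[OF ideal_gen_sub this] show ?thesis by (simp add: cover_ideal_def cover_gen_eq)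
qed

lemma not_principal:
  assumes G: "simple_graph E" and ne: "E \<noteq> {}"
    and c: "c \<in> (cover_ideal E :: ('v::finite, 'k::field) mpoly set)"
    and pr: "\<And>p. p \<in> cover_ideal E \<Longrightarrow> \<exists>t. p = c * t"
  shows False
proof -
  have c0: "\<forall>n\<in>ks c. lk n v = 0" for v
  proof -
    obtain C where C: "C \<subseteq> - {v}" "min_vertex_cover E C"
      using min_cover_exists[OF compl_single_cover[OF G]] by blast
    let ?m = "Poly_Mapping.single (ind C) 1 :: ('v, 'k) mpoly"
    obtain t where t: "?m = c * t" using pr[OF gen_in_cover[OF C(2)]] by blast
    have mnz: "?m \<noteq> 0" by (rule single_nz) simp
    hence cnz: "c \<noteq> 0" and tnz: "t \<noteq> 0" using t by auto
    have "dy v ?m = 0" using C(1) by (intro antisym[OF dy_le]) (auto simp: lookup_ind)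
    hence "dy v c = 0" using top_mult(1)[OF cnz tnz, of v] t by simp
    thus ?thesis using dy_ge[of _ c v] by fastforce
  qed
  have "ks c \<subseteq> {0}"
  proof
    fix n assume "n \<in> ks c"
    hence "lk n v = 0" for v using c0 by blast
    hence "n = 0" by (intro poly_mapping_eqI) simp
    thus "n \<in> {0}" by simp
  qed
  moreover obtain e where e: "e \<in> E" using ne by blast
  have "c \<in> PV e" using c e by (auto simp: cover_ideal_Inter)
  hence "ks c \<subseteq> hit e" by (simp add: PV_def MI_def)
  moreover have "0 \<notin> hit e" by (simp add: hit_def)
  ultimately have "ks c = {}" by blast
  hence "c = 0" by simp
  obtain C where C: "min_vertex_cover E C" using min_cover_exists[of E UNIV] edge_ne[OF G] by (auto simp: vertex_cover_def)
  obtain t where "(Poly_Mapping.single (ind C) 1 :: ('v, 'k) mpoly) = c * t"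
    using pr[OF gen_in_cover[OF C]] by blast
  hence "(Poly_Mapping.single (ind C) 1 :: ('v, 'k) mpoly) = 0" using \<open>c = 0\<close> by simp
  moreover have "(Poly_Mapping.single (ind C) 1 :: ('v, 'k) mpoly) \<noteq> 0" by (rule single_nz) simp
  ultimately show False by blast
qed

lemma pd_ge:
  assumes G: "simple_graph E" and ne: "E \<noteq> {}"
    and res: "is_free_resolution (cover_ideal E :: ('v::finite, 'k::field) mpoly set) n r d"
  shows "2 \<le> n"
proof (rule ccontr)
  let ?I = "cover_ideal E :: ('v, 'k) mpoly set"
  assume "\<not> 2 \<le> n"
  hence n01: "n = 0 \<or> n = 1" by auto
  obtain C where C: "min_vertex_cover E C" using min_cover_exists[of E UNIV] edge_ne[OF G] by (auto simp: vertex_cover_def)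
  define g :: "('v, 'k) mpoly" where "g = Poly_Mapping.single (ind C) 1"
  have gI: "g \<in> ?I" unfolding g_def by (rule gen_in_cover[OF C])
  have gnz: "g \<noteq> 0" unfolding g_def by (rule single_nz) simp
  define x :: "nat \<Rightarrow> ('v, 'k) mpoly" where "x = (\<lambda>j. if j = 0 then g else 0)"
  have xk: "x \<in> kernel_at ?I r d 0" using gI by (simp add: kernel_at_def free_mod_def x_def)
  have "x 0 = g" by (simp add: x_def)
  hence xnz: "x \<noteq> (\<lambda>_. 0)" using gnz by auto
  have r0: "r 0 = 1" using res by (simp add: is_free_resolution_def)
  show False
  proof (cases "n = 0")
    case True
    hence "kernel_at ?I r d 0 = {\<lambda>_. 0}" using res by (simp add: is_free_resolution_def)
    thus False using xk xnz by blast
  next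
    case False
    hence n1: "n = 1" using n01 by simp
    have K0: "kernel_at ?I r d 0 = image_at r d 1" and K1: "kernel_at ?I r d 1 = {\<lambda>_. 0}"
      using res n1 by (auto simp: is_free_resolution_def)
    define R where "R = r 1"
    define M where "M = d 1"
    have img: "image_at r d 1 = mat_app 1 R M ` free_mod R" by (simp add: image_at_def r0 R_def M_def)
    have K1': "\<And>z. z \<in> free_mod R \<Longrightarrow> mat_app 1 R M z = (\<lambda>_. 0) \<Longrightarrow> z = (\<lambda>_. 0)"
      using K1 by (auto simp: kernel_at_def r0 R_def M_def)
    have ma: "mat_app 1 R M z = (\<lambda>j. if j = 0 then (\<Sum>k<R. M 0 k * z k) else 0)" for z
      by (auto simp: mat_app_def)
    consider "R = 0" | "R = 1" | "R \<ge> 2" by linarith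
    thus False
    proof cases
      case 1
      have "x \<in> image_at r d 1" using xk K0 by simp
      then obtain y where "x = mat_app 1 R M y" using img by auto
      hence "x = (\<lambda>_. 0)" using 1 unfolding ma by (simp add: fun_eq_iff)
      thus False using xnz by blast
    next
      case 2
      have "\<exists>t. p = M 0 0 * t" if p: "p \<in> ?I" for p
      proof -
        have "(\<lambda>j. if j = 0 then p else 0) \<in> kernel_at ?I r d 0" using p
          by (simp add: kernel_at_def free_mod_def)
        hence "(\<lambda>j. if j = 0 then p else 0) \<in> mat_app 1 R M ` free_mod R" using K0 img by simp
        then obtain y where "(\<lambda>j. if j = 0 then p else 0) = mat_app 1 R M y" by blast
        from fun_cong[OF this, of 0] have "p = (\<Sum>k<R. M 0 k * y k)" unfolding ma by simp
        hence "p = M 0 0 * y 0" using 2 by simp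
        thus ?thesis by blast
      qed
      moreover have "M 0 0 \<in> ?I"
      proof -
        have "(\<lambda>k. if k = 0 then 1 else 0) \<in> free_mod R" using 2 by (simp add: free_mod_def)
        hence "mat_app 1 R M (\<lambda>k. if k = 0 then 1 else 0) \<in> kernel_at ?I r d 0" using K0 img by blast
        thus ?thesis using 2 unfolding ma by (simp add: kernel_at_def)
      qed
      ultimately show False using not_principal[OF G ne] by blast
    next
      case 3
      define z :: "nat \<Rightarrow> ('v, 'k) mpoly" where "z = (\<lambda>k. if k = 0 then M 0 1 else if k = 1 then - M 0 0 else 0)"
      have zf: "z \<in> free_mod R" using 3 by (simp add: free_mod_def z_def)
      have "(\<Sum>k<R. M 0 k * z k) = (\<Sum>k\<in>{0, 1}. M 0 k * z k)"
        by (rule sum.mono_neutral_right) (use 3 in \<open>auto simp: z_def\<close>)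
      also have "\<dots> = 0" by (simp add: z_def algebra_simps)
      finally have "mat_app 1 R M z = (\<lambda>_. 0)" unfolding ma by (simp add: fun_eq_iff)
      hence "z = (\<lambda>_. 0)" by (rule K1'[OF zf])
      hence "z 0 = 0" "z 1 = 0" by simp_all
      hence M01: "M 0 1 = 0" and M00: "M 0 0 = 0" by (simp_all add: z_def)
      define e0 :: "nat \<Rightarrow> ('v, 'k) mpoly" where "e0 = (\<lambda>k. if k = 0 then 1 else 0)"
      have ef: "e0 \<in> free_mod R" using 3 by (simp add: free_mod_def e0_def)
      have "(\<Sum>k<R. M 0 k * e0 k) = (\<Sum>k\<in>{0}. M 0 k * e0 k)"
        by (rule sum.mono_neutral_right) (use 3 in \<open>auto simp: e0_def\<close>)
      hence "mat_app 1 R M e0 = (\<lambda>_. 0)" using M00 unfolding ma by (simp add: fun_eq_iff e0_def)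
      hence "e0 = (\<lambda>_. 0)" by (rule K1'[OF ef])
      hence "e0 0 = 0" by simp
      thus False by (simp add: e0_def)
    qed
  qed
qed


definition mm :: "'v::finite set list \<Rightarrow> nat \<Rightarrow> ('v, 'k::field) mpoly" where
  "mm L k = Poly_Mapping.single (ind (L ! k)) 1"
definition uu :: "'v::finite set list \<Rightarrow> nat \<Rightarrow> ('v, 'k::field) mpoly" where
  "uu L k = Poly_Mapping.single (ind (- (L ! k))) 1"
definition Mall :: "('v::finite, 'k::field) mpoly" where
  "Mall = Poly_Mapping.single (ind UNIV) 1"

definition resd :: "'v::finite set list \<Rightarrow> nat \<Rightarrow> nat \<Rightarrow> nat \<Rightarrow> ('v, 'k::field) mpoly" where
  "resd L = (\<lambda>i j k. if i = 1 then mm L k else if i = 2 then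
      (if j = k then uu L k else if j = Suc k then - uu L j else 0) else 0)"
definition resr :: "'v::finite set list \<Rightarrow> nat \<Rightarrow> nat" where
  "resr L = (\<lambda>i. if i = 0 then 1 else if i = 1 then length L else length L - 1)"

definition Gc :: "(nat \<Rightarrow> 'a::ab_group_add) \<Rightarrow> nat \<Rightarrow> 'a" where
  "Gc c j = c j - (if j = 0 then 0 else c (j - 1))"

lemma mu: "uu L k * mm L k = (Mall :: ('v::finite, 'k::field) mpoly)"
proof -
  have "ind (- (L ! k)) + ind (L ! k) = ind (UNIV :: 'v set)"
    using ind_union[of "- (L ! k)" "L ! k"] by (simp add: Un_commute)
  thus ?thesis by (simp add: uu_def mm_def Mall_def mult_single)
qed

lemma Mall_nz: "(Mall :: ('v::finite, 'k::field) mpoly) \<noteq> 0"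
  unfolding Mall_def by (rule single_nz) simp

lemma uu_nz: "(uu L k :: ('v::finite, 'k::field) mpoly) \<noteq> 0"
  unfolding uu_def by (rule single_nz) simp

lemma Gc_telescope: "(\<Sum>k<N. Gc c k) = (if N = 0 then 0 else c (N - 1))"
  by (induction N) (auto simp: Gc_def)

lemma mat_app_d1:
  "mat_app 1 r (resd L 1) x = (\<lambda>j. if j = 0 then (\<Sum>k<r. mm L k * x k) else 0)"
  by (auto simp: mat_app_def resd_def)

lemma d2_sum:
  fixes c :: "nat \<Rightarrow> ('v::finite, 'k::field) mpoly"
  assumes c: "c \<in> free_mod (r - 1)" and j: "j < r"
  shows "(\<Sum>k<r - 1. resd L 2 j k * c k) = uu L j * Gc c j"
proof -
  have "(\<Sum>k<r - 1. resd L 2 j k * c k)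
      = (\<Sum>k<r - 1. (if k = j then uu L j * c j else 0) + (if Suc k = j then - (uu L j * c k) else 0))"
    by (intro sum.cong refl) (auto simp: resd_def)
  also have "\<dots> = (\<Sum>k<r - 1. if k = j then uu L j * c j else 0) + (\<Sum>k<r - 1. if Suc k = j then - (uu L j * c k) else 0)"
    by (rule sum.distrib)
  also have "(\<Sum>k<r - 1. if k = j then uu L j * c j else 0) = uu L j * c j"
  proof (cases "j < r - 1")
    case True thus ?thesis by (simp add: sum.delta)
  next
    case False hence "c j = 0" using c by (simp add: free_mod_def)
    thus ?thesis using False by (simp add: sum.delta)
  qed
  also have "(\<Sum>k<r - 1. if Suc k = j then - (uu L j * c k) else 0) = (if j = 0 then 0 else - (uu L j * c (j - 1)))"
  proof (cases j)
    case 0 thus ?thesis by simp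
  next
    case (Suc j')
    have "(\<Sum>k<r - 1. if Suc k = j then - (uu L j * c k) else 0) = (\<Sum>k<r - 1. if k = j' then - (uu L j * c k) else 0)"
      using Suc by (intro sum.cong refl) auto
    also have "\<dots> = - (uu L j * c j')"
    proof -
      have "j' < r - 1" using Suc j by linarith
      thus ?thesis by (simp add: sum.delta)
    qed
    finally show ?thesis using Suc by simp
  qed
  finally show ?thesis by (simp add: Gc_def algebra_simps)
qed

lemma mat_app_d2:
  fixes c :: "nat \<Rightarrow> ('v::finite, 'k::field) mpoly"
  assumes c: "c \<in> free_mod (r - 1)"
  shows "mat_app r (r - 1) (resd L 2) c = (\<lambda>j. if j < r then uu L j * Gc c j else 0)"
  using d2_sum[OF c] by (auto simp: mat_app_def)

context
  fixes E :: "'v::finite set set" and L :: "'v set list"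
  assumes G: "simple_graph E"
    and Lset: "set L = {C. min_vertex_cover E C}"
    and Ldisj: "\<And>j k. j < length L \<Longrightarrow> k < length L \<Longrightarrow> j \<noteq> k \<Longrightarrow> - (L ! j) \<subseteq> L ! k"
begin

lemma Lmin: "k < length L \<Longrightarrow> min_vertex_cover E (L ! k)"
  using Lset nth_mem by blast

lemma cover_LC:
  "(cover_ideal E :: ('v, 'k::field) mpoly set) = {(\<Sum>k<length L. mm L k * y k) | y. True}"
proof
  let ?LC = "{(\<Sum>k<length L. mm L k * y k) | y. True} :: ('v, 'k) mpoly set"
  have idLC: "is_ideal ?LC"
    unfolding is_ideal_def
  proof (intro conjI ballI allI)
    show "0 \<in> ?LC" by (rule CollectI, rule exI[of _ "\<lambda>_. 0"]) simp
  next
    fix a b assume "a \<in> ?LC" "b \<in> ?LC"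
    then obtain ya yb where "a = (\<Sum>k<length L. mm L k * ya k)" "b = (\<Sum>k<length L. mm L k * yb k)" by blast
    hence "a + b = (\<Sum>k<length L. mm L k * (ya k + yb k))" by (simp add: sum.distrib algebra_simps)
    thus "a + b \<in> ?LC" by (intro CollectI exI[of _ "\<lambda>k. ya k + yb k"]) simp
  next
    fix a r assume "a \<in> ?LC"
    then obtain ya where "a = (\<Sum>k<length L. mm L k * ya k)" by blast
    hence "r * a = (\<Sum>k<length L. mm L k * (r * ya k))" by (simp add: sum_distrib_left algebra_simps)
    thus "r * a \<in> ?LC" by (intro CollectI exI[of _ "\<lambda>k. r * ya k"]) simp
  qed
  have gens: "{(Poly_Mapping.single (ind C) 1 :: ('v, 'k) mpoly) |C. min_vertex_cover E C} \<subseteq> ?LC"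
  proof
    fix x assume "x \<in> {(Poly_Mapping.single (ind C) 1 :: ('v, 'k) mpoly) |C. min_vertex_cover E C}"
    then obtain C where x: "x = Poly_Mapping.single (ind C) 1" "min_vertex_cover E C" by blast
    then obtain k0 where k0: "k0 < length L" "L ! k0 = C" using Lset by (metis in_set_conv_nth mem_Collect_eq)
    have "(\<Sum>k<length L. mm L k * (if k = k0 then 1 else 0)) = (mm L k0 :: ('v, 'k) mpoly)"
      using k0(1) by (simp add: sum.delta if_distrib cong: if_cong)
    hence "x = (\<Sum>k<length L. mm L k * (if k = k0 then 1 else 0))" using x k0 by (simp add: mm_def)
    thus "x \<in> ?LC" by (intro CollectI exI[of _ "\<lambda>k. if k = k0 then 1 else 0"]) simp
  qed
  show "cover_ideal E \<subseteq> ?LC"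
    unfolding cover_ideal_def cover_gen_eq by (rule ideal_gen_least[OF idLC gens])
  show "?LC \<subseteq> cover_ideal E"
  proof
    fix x assume "x \<in> ?LC"
    then obtain y where x: "x = (\<Sum>k<length L. mm L k * y k)" by blast
    have "mm L k * y k \<in> cover_ideal E" if "k \<in> {..<length L}" for k
      using that gen_in_cover[OF Lmin] ideal_gen_ideal
      by (intro ideal_mult2) (auto simp: mm_def cover_ideal_def)
    thus "x \<in> cover_ideal E" unfolding x cover_ideal_def by (intro ideal_sum[OF ideal_gen_ideal]) (auto simp: cover_ideal_def)
  qed
qed

lemma divis:
  fixes x :: "nat \<Rightarrow> ('v, 'k::field) mpoly"
  assumes s: "(\<Sum>k<length L. mm L k * x k) = 0" and j: "j < length L"
  shows "\<exists>q. x j = uu L j * q"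
proof -
  let ?e = "ind (- (L ! j))"
  let ?U = "MI {n. le_pm ?e n} :: ('v, 'k) mpoly set"
  have up: "upc {n. le_pm ?e n}" unfolding upc_def using le_pm_trans by blast
  have idU: "is_ideal ?U" by (rule MI_ideal[OF up])
  have mk: "mm L k \<in> ?U" if "k < length L" "k \<noteq> j" for k
  proof -
    have "- (L ! j) \<subseteq> L ! k" by (rule Ldisj[OF j that(1) that(2)[symmetric]])
    hence "le_pm ?e (ind (L ! k))" by (auto simp: le_pm_def lookup_ind)
    thus ?thesis by (simp add: mm_def MI_def)
  qed
  have "mm L j * x j = - (\<Sum>k\<in>{..<length L} - {j}. mm L k * x k)"
    using s j by (simp add: sum.remove eq_neg_iff_add_eq_0)
  also have "\<dots> \<in> ?U"
    using mk idU by (intro ideal_uminus[OF idU] ideal_sum[OF idU] ideal_mult2) auto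
  finally have inU: "ks (mm L j * x j) \<subseteq> {n. le_pm ?e n}" by (simp add: MI_def)
  have "\<forall>n\<in>ks (x j). le_pm ?e n"
  proof
    fix n assume n: "n \<in> ks (x j)"
    have "ind (L ! j) + n \<in> ks (mm L j * x j)"
      using n keys_single_mult[of "1::'k" "ind (L ! j)" "x j"] by (simp add: mm_def)
    hence "le_pm ?e (ind (L ! j) + n)" using inU by blast
    thus "le_pm ?e n" by (auto simp: le_pm_def lookup_ind lookup_add split: if_splits)
  qed
  then obtain q where "x j = Poly_Mapping.single ?e 1 * q" using mon_div by blast
  thus ?thesis by (auto simp: uu_def)
qed

lemma resolution:
  "is_free_resolution (cover_ideal E :: ('v, 'k::field) mpoly set) 2 (resr L) (resd L)"
proof -
  let ?I = "cover_ideal E :: ('v, 'k) mpoly set"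
  let ?r = "length L"
  have r0: "resr L 0 = 1" and r1: "resr L 1 = ?r" and r2: "resr L 2 = ?r - 1" by (simp_all add: resr_def)
  have K0: "kernel_at ?I (resr L) (resd L) 0 = image_at (resr L) (resd L) 1"
  proof -
    have img: "image_at (resr L) (resd L :: nat \<Rightarrow> nat \<Rightarrow> nat \<Rightarrow> ('v, 'k) mpoly) 1 = mat_app 1 ?r (resd L 1) ` free_mod ?r"
      by (simp add: image_at_def resr_def)
    show ?thesis unfolding img
    proof
      show "kernel_at ?I (resr L) (resd L) 0 \<subseteq> mat_app 1 ?r (resd L 1) ` free_mod ?r"
      proof
        fix x :: "nat \<Rightarrow> ('v, 'k) mpoly" assume "x \<in> kernel_at ?I (resr L) (resd L) 0"
        hence x: "x \<in> free_mod 1" "x 0 \<in> ?I" by (auto simp: kernel_at_def)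
        then obtain y where y: "x 0 = (\<Sum>k<?r. mm L k * y k)" using cover_LC by blast
        define y' where "y' = (\<lambda>k. if k < ?r then y k else 0)"
        have y'f: "y' \<in> free_mod ?r" by (simp add: free_mod_def y'_def)
        have "x = mat_app 1 ?r (resd L 1) y'"
          unfolding mat_app_d1
        proof
          fix j show "x j = (if j = 0 then (\<Sum>k<?r. mm L k * y' k) else 0)"
            using x(1) y by (auto simp: free_mod_def y'_def)
        qed
        thus "x \<in> mat_app 1 ?r (resd L 1) ` free_mod ?r" using y'f by blast
      qed
      show "mat_app 1 ?r (resd L 1) ` free_mod ?r \<subseteq> kernel_at ?I (resr L) (resd L) 0"
      proof
        fix x :: "nat \<Rightarrow> ('v, 'k) mpoly" assume "x \<in> mat_app 1 ?r (resd L 1) ` free_mod ?r"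
        then obtain y where x: "x = mat_app 1 ?r (resd L 1) y" by blast
        have "x 0 \<in> ?I" unfolding x mat_app_d1 using cover_LC by auto
        moreover have "x \<in> free_mod 1" unfolding x mat_app_d1 by (simp add: free_mod_def)
        ultimately show "x \<in> kernel_at ?I (resr L) (resd L) 0" by (simp add: kernel_at_def)
      qed
    qed
  qed
  have k1: "kernel_at ?I (resr L) (resd L) 1 = {x \<in> free_mod ?r. (\<Sum>k<?r. mm L k * x k) = 0}"
  proof -
    have eq: "mat_app 1 ?r (resd L 1) x = (\<lambda>_. 0) \<longleftrightarrow> (\<Sum>k<?r. mm L k * x k) = 0" for x :: "nat \<Rightarrow> ('v, 'k) mpoly"
      unfolding mat_app_d1 by (auto simp: fun_eq_iff)
    have "kernel_at ?I (resr L) (resd L) 1 = {x \<in> free_mod ?r. mat_app 1 ?r (resd L 1) x = (\<lambda>_. 0)}"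
      by (simp add: kernel_at_def resr_def)
    also have "\<dots> = {x \<in> free_mod ?r. (\<Sum>k<?r. mm L k * x k) = 0}" using eq by blast
    finally show ?thesis .
  qed
  have i2: "image_at (resr L) (resd L :: nat \<Rightarrow> nat \<Rightarrow> nat \<Rightarrow> ('v, 'k) mpoly) 2 = mat_app ?r (?r - 1) (resd L 2) ` free_mod (?r - 1)"
    by (simp add: image_at_def resr_def)
  have K1: "kernel_at ?I (resr L) (resd L) 1 = image_at (resr L) (resd L) 2"
    unfolding k1 i2
  proof
    show "{x \<in> free_mod ?r. (\<Sum>k<?r. mm L k * x k) = (0::('v, 'k) mpoly)} \<subseteq> mat_app ?r (?r - 1) (resd L 2) ` free_mod (?r - 1)"
    proof
      fix x :: "nat \<Rightarrow> ('v, 'k) mpoly" assume "x \<in> {x \<in> free_mod ?r. (\<Sum>k<?r. mm L k * x k) = 0}"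
      hence xf: "x \<in> free_mod ?r" and xs: "(\<Sum>k<?r. mm L k * x k) = 0" by auto
      have "\<forall>j. \<exists>q. j < ?r \<longrightarrow> x j = uu L j * q" using divis[OF xs] by blast
      then obtain q where q: "\<And>j. j < ?r \<Longrightarrow> x j = uu L j * q j" by metis
      have "mm L j * x j = Mall * q j" if "j < ?r" for j
      proof -
        have "mm L j * x j = (uu L j * mm L j) * q j" using q[OF that] by (simp add: ac_simps)
        thus ?thesis by (simp add: mu)
      qed
      hence "Mall * (\<Sum>j<?r. q j) = (\<Sum>j<?r. mm L j * x j)"
        by (simp add: sum_distrib_left)
      hence "Mall * (\<Sum>j<?r. q j) = 0" using xs by simp
      hence qs: "(\<Sum>j<?r. q j) = 0" using Mall_nz mpoly_mult_eq0 by blast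
      define S where "S = (\<lambda>k. \<Sum>i<k. q i)"
      define c where "c = (\<lambda>k. if k < ?r - 1 then S (Suc k) else 0)"
      have cf: "c \<in> free_mod (?r - 1)" by (simp add: free_mod_def c_def)
      have cS: "c k = S (Suc k)" if "k < ?r" for k
      proof (cases "k < ?r - 1")
        case True thus ?thesis by (simp add: c_def)
      next
        case False hence "Suc k = ?r" using that by simp
        thus ?thesis using False qs by (simp add: c_def S_def)
      qed
      have G: "Gc c j = q j" if "j < ?r" for j
      proof (cases j)
        case 0 thus ?thesis using cS[OF that] by (simp add: Gc_def S_def)
      next
        case (Suc j') thus ?thesis using cS[OF that] cS[of j'] that by (simp add: Gc_def S_def)
      qed
      have "mat_app ?r (?r - 1) (resd L 2) c = x"
        unfolding mat_app_d2[OF cf]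
      proof
        fix j show "(if j < ?r then uu L j * Gc c j else 0) = x j"
          using G q xf by (auto simp: free_mod_def)
      qed
      thus "x \<in> mat_app ?r (?r - 1) (resd L 2) ` free_mod (?r - 1)" using cf by blast
    qed
    show "mat_app ?r (?r - 1) (resd L 2) ` free_mod (?r - 1) \<subseteq> {x \<in> free_mod ?r. (\<Sum>k<?r. mm L k * x k) = (0::('v, 'k) mpoly)}"
    proof
      fix x :: "nat \<Rightarrow> ('v, 'k) mpoly" assume "x \<in> mat_app ?r (?r - 1) (resd L 2) ` free_mod (?r - 1)"
      then obtain c where cf: "c \<in> free_mod (?r - 1)" and x: "x = mat_app ?r (?r - 1) (resd L 2) c" by blast
      have xj: "x = (\<lambda>j. if j < ?r then uu L j * Gc c j else 0)" using x mat_app_d2[OF cf] by simp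
      have "x \<in> free_mod ?r" by (simp add: xj free_mod_def)
      moreover have "(\<Sum>k<?r. mm L k * x k) = Mall * (\<Sum>k<?r. Gc c k)"
      proof -
        have "mm L k * x k = Mall * Gc c k" if "k < ?r" for k
        proof -
          have "mm L k * x k = (uu L k * mm L k) * Gc c k" using that by (simp add: xj ac_simps)
          thus ?thesis by (simp add: mu)
        qed
        thus ?thesis by (simp add: sum_distrib_left)
      qed
      moreover have "(\<Sum>k<?r. Gc c k) = 0"
        using cf by (simp add: Gc_telescope free_mod_def)
      ultimately show "x \<in> {x \<in> free_mod ?r. (\<Sum>k<?r. mm L k * x k) = 0}" by simp
    qed
  qed
  have K2: "kernel_at ?I (resr L) (resd L) 2 = {\<lambda>_. 0}"
  proof -
    have k2: "kernel_at ?I (resr L) (resd L) 2 = {c \<in> free_mod (?r - 1). mat_app ?r (?r - 1) (resd L 2) c = (\<lambda>_. 0)}"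
      by (simp add: kernel_at_def resr_def)
    show ?thesis unfolding k2
    proof
      show "{c \<in> free_mod (?r - 1). mat_app ?r (?r - 1) (resd L 2 :: nat \<Rightarrow> nat \<Rightarrow> ('v, 'k) mpoly) c = (\<lambda>_. 0)} \<subseteq> {\<lambda>_. 0}"
      proof
        fix c :: "nat \<Rightarrow> ('v, 'k) mpoly" assume "c \<in> {c \<in> free_mod (?r - 1). mat_app ?r (?r - 1) (resd L 2) c = (\<lambda>_. 0)}"
        hence cf: "c \<in> free_mod (?r - 1)" and c0: "mat_app ?r (?r - 1) (resd L 2) c = (\<lambda>_. 0)" by auto
        have Gz: "Gc c j = 0" if "j < ?r" for j
        proof -
          have "uu L j * Gc c j = 0" using fun_cong[OF c0, of j] that mat_app_d2[OF cf] by simp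
          thus ?thesis using uu_nz mpoly_mult_eq0 by blast
        qed
        have "c j = 0" for j
        proof (induction j)
          case 0 thus ?case
          proof (cases "0 < ?r")
            case True thus ?thesis using Gz[OF True] by (simp add: Gc_def)
          next
            case False thus ?thesis using cf by (simp add: free_mod_def)
          qed
        next
          case (Suc j) thus ?case
          proof (cases "Suc j < ?r")
            case True thus ?thesis using Gz[OF True] Suc by (simp add: Gc_def)
          next
            case False thus ?thesis using cf by (simp add: free_mod_def)
          qed
        qed
        thus "c \<in> {\<lambda>_. 0}" by auto
      qed
      show "{\<lambda>_. 0} \<subseteq> {c \<in> free_mod (?r - 1). mat_app ?r (?r - 1) (resd L 2 :: nat \<Rightarrow> nat \<Rightarrow> ('v, 'k) mpoly) c = (\<lambda>_. 0)}"
        by (auto simp: free_mod_def mat_app_def)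
    qed
  qed
  have "\<forall>i<2. kernel_at ?I (resr L) (resd L) i = image_at (resr L) (resd L) (Suc i)"
  proof (intro allI impI)
    fix i :: nat assume "i < 2"
    hence "i = 0 \<or> i = 1" by auto
    thus "kernel_at ?I (resr L) (resd L) i = image_at (resr L) (resd L) (Suc i)"
      using K0 K1 by (auto simp: numeral_2_eq_2)
  qed
  thus ?thesis using r0 K2 by (simp add: is_free_resolution_def)
qed

end


lemma E_nonempty:
  assumes v: "v_number (cover_ideal E :: ('v::finite, 'k::field) mpoly set) = enat n"
  shows "E \<noteq> {}"
proof
  assume "E = {}"
  hence I: "(cover_ideal E :: ('v, 'k) mpoly set) = UNIV" by (simp add: cover_ideal_Inter)
  have "Ass (cover_ideal E :: ('v, 'k) mpoly set) = {}"
    unfolding I Ass_def colon_elem_def by (auto simp: is_prime_ideal_def)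
  hence "v_number (cover_ideal E :: ('v, 'k) mpoly set) = \<infinity>"
    unfolding v_number_def by (simp add: top_enat_def)
  thus False using v by simp
qed

theorem part_a:
  assumes G: "simple_graph E"
    and v: "v_number (cover_ideal E :: ('v::finite, 'k::field) mpoly set) = enat (card (UNIV :: 'v set) - 2)"
  shows "cohen_macaulay (cover_ideal E :: ('v, 'k) mpoly set)"
proof -
  let ?I = "cover_ideal E :: ('v, 'k) mpoly set"
  have ne: "E \<noteq> {}" by (rule E_nonempty[OF v])
  have dom: "\<And>e k. e \<in> E \<Longrightarrow> k \<notin> e \<Longrightarrow> \<exists>e'\<in>E. e' \<noteq> e \<and> e' \<subseteq> insert k e"
    using dominating[OF G v] by blast
  have fin: "finite {C. min_vertex_cover E C}" by simp
  obtain L where Lset: "set L = {C. min_vertex_cover E C}" and Ld: "distinct L"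
    using finite_distinct_list[OF fin] by blast
  have Ldisj: "- (L ! j) \<subseteq> L ! k" if "j < length L" "k < length L" "j \<noteq> k" for j k
  proof -
    have "L ! j \<noteq> L ! k" using Ld that by (simp add: nth_eq_iff_index_eq)
    moreover have "min_vertex_cover E (L ! j)" "min_vertex_cover E (L ! k)"
      using that Lset nth_mem by blast+
    ultimately show ?thesis using min_covers_disjoint_compl[OF G dom] by blast
  qed
  have res: "is_free_resolution ?I 2 (resr L) (resd L)"
    by (rule resolution[OF G Lset Ldisj])
  have "proj_dim_quot ?I \<le> enat 2"
    unfolding proj_dim_quot_def using res by (intro INF_lower) blast
  moreover have "enat 2 \<le> proj_dim_quot ?I"
    unfolding proj_dim_quot_def using pd_ge[OF G ne] by (intro INF_greatest) auto
  ultimately have "proj_dim_quot ?I = 2" by (simp add: numeral_eq_enat)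
  moreover have "height ?I = 2" by (rule cover_height[OF G ne])
  ultimately show ?thesis by (simp add: cohen_macaulay_def)
qed

theorem corollary3p11:
  fixes E :: "('v::finite) set set"
  assumes "simple_graph E"
    and "v_number (cover_ideal E :: ('v, 'k::field) mpoly set) = enat (card (UNIV :: 'v set) - 2)"
  shows "cohen_macaulay (cover_ideal E :: ('v, 'k) mpoly set)
       \<and> (\<forall>P\<in>Ass (cover_ideal E :: ('v, 'k) mpoly set).
           v_number_at (cover_ideal E) P = enat (card (UNIV :: 'v set) - 2))
       \<and> (\<forall>P\<in>Ass (cover_ideal E :: ('v, 'k) mpoly set).
           \<exists>g. colon (cover_ideal E) P = {a + h * g | a h. a \<in> cover_ideal E})"
  using part_a[OF assms] part_b[OF assms] part_c[OF assms] by blast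

end
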